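(* Let $H\in(\frac12,1)$ and $\theta>0$. Let $B=(B_t)_{t\ge0}$ be a fractional Brownian motion with Hurst index $H$, and let $X$ be the solution of $X_0=0$, $dX_t=\theta X_t\,dt+dB_t$, $t\ge0$, i.e. $X_t=e^{\theta t}\int_0^t e^{-\theta s}dB_s$. Define the least squares estimator $$\widehat{\theta}_t=\frac{\int_0^t X_s\,dX_s}{\int_0^t X_s^2\,ds},\qquad t>0,$$ where $\int_0^t X_s\,dX_s$ is a Young (pathwise Riemann–Stieltjes) integral. Then $\widehat{\theta}_t\to\theta$ almost surely as $t\to\infty$.
   Context: A fractional Brownian motion with Hurst index $H\in(0,1)$ is a centered Gaussian process $(B_t)_{t\ge0}$ with $B_0=0$ and covariance $E(B_tB_s)=\frac12(t^{2H}+s^{2H}-|t-s|^{2H})$; it has a modification with $(H-\varepsilon)$-Hölder continuous paths for every $\varepsilon\in(0,H)$. For $H>\frac12$, integrals $\int f\,dg$ of Hölder functions of orders $\alpha,\beta$ with $\alpha+\beta>1$ are understood in the Young (Riemann–Stieltjes) sense; in particular $\int_0^tX_s\,dX_s=X_t^2/2$. *)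

theory Defs
  imports "HOL-Probability.Probability"
begin

definition fbm_cov :: "real \<Rightarrow> real \<Rightarrow> real \<Rightarrow> real" where
  "fbm_cov H t s = (t powr (2*H) + s powr (2*H) - \<bar>t - s\<bar> powr (2*H)) / 2"

text \<open>Centered Gaussian process indexed by t >= 0 with covariance R:
  every finite linear combination of its values is a centered normal
  random variable with the variance prescribed by R (degenerate = a.s. zero).\<close>
definition centered_gaussian_process ::
  "'a measure \<Rightarrow> (real \<Rightarrow> 'a \<Rightarrow> real) \<Rightarrow> (real \<Rightarrow> real \<Rightarrow> real) \<Rightarrow> bool" where
  "centered_gaussian_process M B R \<longleftrightarrow>
     (\<forall>t\<ge>0. B t \<in> borel_measurable M) \<and>
     (\<forall>(n::nat) (ts::nat \<Rightarrow> real) (c::nat \<Rightarrow> real). (\<forall>i<n. 0 \<le> ts i) \<longrightarrow>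
        (let Y = (\<lambda>\<omega>. \<Sum>i<n. c i * B (ts i) \<omega>);
             v = (\<Sum>i<n. \<Sum>j<n. c i * c j * R (ts i) (ts j))
         in if v \<le> 0 then (AE \<omega> in M. Y \<omega> = 0)
            else distributed M lborel Y (normal_density 0 (sqrt v))))"

definition fBm :: "'a measure \<Rightarrow> real \<Rightarrow> (real \<Rightarrow> 'a \<Rightarrow> real) \<Rightarrow> bool" where
  "fBm M H B \<longleftrightarrow> 0 < H \<and> H < 1 \<and> (AE \<omega> in M. B 0 \<omega> = 0) \<and>
     centered_gaussian_process M B (fbm_cov H)"

definition RS_sum :: "(real \<Rightarrow> real) \<Rightarrow> (real \<Rightarrow> real) \<Rightarrow> (nat \<Rightarrow> real) \<Rightarrow> (nat \<Rightarrow> real) \<Rightarrow> nat \<Rightarrow> real" where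
  "RS_sum f g p xi n = (\<Sum>i<n. f (xi i) * (g (p (Suc i)) - g (p i)))"

definition has_RS_integral :: "(real \<Rightarrow> real) \<Rightarrow> (real \<Rightarrow> real) \<Rightarrow> real \<Rightarrow> real \<Rightarrow> real \<Rightarrow> bool" where
  "has_RS_integral f g a b I \<longleftrightarrow>
     (\<forall>\<epsilon>>0. \<exists>\<delta>>0. \<forall>(n::nat) p xi.
        p 0 = a \<and> p n = b \<and>
        (\<forall>i<n. p i < p (Suc i) \<and> p (Suc i) - p i < \<delta> \<and> p i \<le> xi i \<and> xi i \<le> p (Suc i))
        \<longrightarrow> \<bar>RS_sum f g p xi n - I\<bar> < \<epsilon>)"

definition RS_integral :: "(real \<Rightarrow> real) \<Rightarrow> (real \<Rightarrow> real) \<Rightarrow> real \<Rightarrow> real \<Rightarrow> real" where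
  "RS_integral f g a b = (THE I. has_RS_integral f g a b I)"

end

theory Submission
  imports Defs "HOL-Real_Asymp.Real_Asymp"
begin

lemma normal_tail:
  assumes P: "prob_space M" and D: "distributed M lborel Y (normal_density 0 \<sigma>)"
    and s: "0 < \<sigma>" and a: "0 < a"
  shows "measure M {\<omega>\<in>space M. a \<le> \<bar>Y \<omega>\<bar>} \<le> (fact (2*k) / ((2/\<sigma>\<^sup>2)^k * fact k)) / a^(2*k)"
proof -
  interpret prob_space M by fact
  have Ym[measurable]: "Y \<in> borel_measurable M"
    using D by (auto simp: distributed_def)
  have int1: "integrable lborel (\<lambda>x. normal_density 0 \<sigma> x * x^(2*k))"
    using normal_moment_even[OF s, of 0 k] by (simp add: has_bochner_integral_iff)
  have intY: "integrable M (\<lambda>\<omega>. Y \<omega> ^ (2*k))"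
    using distributed_integrable[OF D, of "\<lambda>x. x^(2*k)"] int1 by auto
  have EY: "(\<integral>\<omega>. Y \<omega> ^ (2*k) \<partial>M) = fact (2*k) / ((2/\<sigma>\<^sup>2)^k * fact k)"
    using distributed_integral[OF D, of "\<lambda>x. x^(2*k)"] integral_normal_moment_even[OF s, of 0 k]
    by auto
  have eq: "{\<omega>\<in>space M. a \<le> \<bar>Y \<omega>\<bar>} \<subseteq> {\<omega>\<in>space M. a^(2*k) \<le> Y \<omega> ^ (2*k)}"
  proof
    fix \<omega> assume "\<omega> \<in> {\<omega>\<in>space M. a \<le> \<bar>Y \<omega>\<bar>}"
    then have "\<omega> \<in> space M" "a \<le> \<bar>Y \<omega>\<bar>" by auto
    then have "a^(2*k) \<le> \<bar>Y \<omega>\<bar>^(2*k)" using a by (intro power_mono) auto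
    also have "\<bar>Y \<omega>\<bar>^(2*k) = Y \<omega> ^ (2*k)" by (simp add: power_mult power2_abs)
    finally show "\<omega> \<in> {\<omega>\<in>space M. a^(2*k) \<le> Y \<omega> ^ (2*k)}" using \<open>\<omega> \<in> space M\<close> by auto
  qed
  have "measure M {\<omega>\<in>space M. a \<le> \<bar>Y \<omega>\<bar>} \<le> measure M {\<omega>\<in>space M. a^(2*k) \<le> Y \<omega> ^ (2*k)}"
    by (intro finite_measure_mono eq) measurable
  also have "\<dots> \<le> (\<integral>\<omega>. Y \<omega> ^ (2*k) \<partial>M) / a^(2*k)"
    by (intro integral_Markov_inequality_measure[OF intY, of "space M"]) (use a in \<open>auto simp: power_mult\<close>)
  finally show ?thesis using EY by simp
qed

lemma fbm_cov_diag: "t \<ge> 0 \<Longrightarrow> fbm_cov H t t = t powr (2*H)"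
  by (simp add: fbm_cov_def)

lemma fbm_cov_sym: "fbm_cov H s t = fbm_cov H t s"
  by (simp add: fbm_cov_def abs_minus_commute)

lemma fbm_incr:
  assumes F: "fBm M H B" and st: "0 \<le> s" "0 \<le> t" "s \<noteq> t"
  shows "distributed M lborel (\<lambda>\<omega>. B t \<omega> - B s \<omega>) (normal_density 0 (\<bar>t - s\<bar> powr H))"
proof -
  have G: "centered_gaussian_process M B (fbm_cov H)" and H: "0 < H" using F by (auto simp: fBm_def)
  define ts where "ts = (\<lambda>i::nat. if i = 0 then t else s)"
  define c where "c = (\<lambda>i::nat. if i = 0 then (1::real) else -1)"
  have "\<forall>i<2. 0 \<le> ts i" using st by (auto simp: ts_def)
  with G have *: "let Y = (\<lambda>\<omega>. \<Sum>i<2. c i * B (ts i) \<omega>);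
             v = (\<Sum>i<2. \<Sum>j<2. c i * c j * fbm_cov H (ts i) (ts j))
         in if v \<le> 0 then (AE \<omega> in M. Y \<omega> = 0)
            else distributed M lborel Y (normal_density 0 (sqrt v))"
    unfolding centered_gaussian_process_def by blast
  have Y: "(\<lambda>\<omega>. \<Sum>i<2. c i * B (ts i) \<omega>) = (\<lambda>\<omega>. B t \<omega> - B s \<omega>)"
    by (simp add: numeral_2_eq_2 c_def ts_def)
  have v: "(\<Sum>i<2. \<Sum>j<2. c i * c j * fbm_cov H (ts i) (ts j)) = \<bar>t - s\<bar> powr (2*H)"
    using st by (simp add: numeral_2_eq_2 c_def ts_def fbm_cov_def abs_minus_commute field_simps)
  have vpos: "\<bar>t - s\<bar> powr (2*H) > 0" using st by simp
  have sq: "sqrt (\<bar>t - s\<bar> powr (2*H)) = \<bar>t - s\<bar> powr H"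
    using powr_half_sqrt_powr[of "\<bar>t - s\<bar>" "2*H"] by simp
  show ?thesis using * unfolding Y v Let_def using vpos sq by simp
qed

lemma pow_powr_aux: "0 < x \<Longrightarrow> (x powr a) ^ n = x powr (a * real n)"
  by (simp add: powr_powr[symmetric] powr_realpow)

lemma tail_bound_alg:
  fixes x H \<gamma> w :: real and k :: nat
  assumes x: "0 < x" "x \<le> 1" and g: "\<gamma> < H" and kk: "2 \<le> 2 * real k * (H - \<gamma>)" and k1: "1 \<le> k"
    and w: "1 \<le> w"
  shows "fact (2*k) / ((2/(x powr H)\<^sup>2)^k * fact k) / (w * x powr \<gamma>)^(2*k)
         \<le> (fact (2*k) / (2^k * fact k)) * x\<^sup>2 / w\<^sup>2"
proof -
  define C where "C = (fact (2*k) / (2^k * fact k) :: real)"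
  have C0: "0 \<le> C" by (simp add: C_def)
  have e1: "fact (2*k) / ((2/(x powr H)\<^sup>2)^k * fact k) = C * (x powr H)^(2*k)"
    using x by (simp add: C_def power_divide power_mult field_simps flip: power_mult)
  have e2: "(w * x powr \<gamma>)^(2*k) = w^(2*k) * (x powr \<gamma>)^(2*k)"
    by (simp add: power_mult_distrib)
  have r: "(x powr H)^(2*k) / (x powr \<gamma>)^(2*k) = x powr ((H - \<gamma>) * (2 * real k))"
    using x by (simp add: pow_powr_aux powr_diff[symmetric] algebra_simps)
  have r2: "x powr ((H - \<gamma>) * (2 * real k)) \<le> x powr 2"
    using x kk by (intro powr_mono') (auto simp: algebra_simps)
  have w2: "w\<^sup>2 \<le> w^(2*k)"
    using w k1 by (intro power_increasing) auto
  have "fact (2*k) / ((2/(x powr H)\<^sup>2)^k * fact k) / (w * x powr \<gamma>)^(2*k)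
      = C * ((x powr H)^(2*k) / (x powr \<gamma>)^(2*k)) / w^(2*k)"
    unfolding e1 e2 by simp
  also have "\<dots> \<le> C * x\<^sup>2 / w\<^sup>2"
  proof -
    have "C * ((x powr H)^(2*k) / (x powr \<gamma>)^(2*k)) \<le> C * x\<^sup>2"
      using r r2 C0 x by (simp add: mult_left_mono powr_numeral)
    moreover have "0 < w\<^sup>2" using w by simp
    ultimately show ?thesis using w2 C0 by (intro frac_le) auto
  qed
  finally show ?thesis by (simp add: C_def)
qed

lemma (in finite_measure) measure_UN_bound:
  assumes "\<And>i. A i \<in> sets M" "\<And>i. measure M (A i) \<le> b i" "summable b"
  shows "measure M (\<Union>i. A i) \<le> suminf b"
proof -
  have s: "summable (\<lambda>i. measure M (A i))"
    by (rule summable_comparison_test[OF _ assms(3)]) (use assms(2) in auto)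
  have "measure M (\<Union>i. A i) \<le> (\<Sum>i. measure M (A i))"
    by (rule finite_measure_subadditive_countably) (use assms(1) s in auto)
  also have "\<dots> \<le> suminf b" by (rule suminf_le[OF assms(2) s assms(3)])
  finally show ?thesis .
qed

lemma alg_aux1: "0 < (W::real) \<Longrightarrow> 0 < q \<Longrightarrow> q * (C * (1/q)\<^sup>2 / W) = C / W * (1/q)"
  by (simp add: power2_eq_square field_simps)

lemma summable_inv_sq: "summable (\<lambda>n::nat. 1 / (real n + 1)\<^sup>2)"
proof -
  have "summable (\<lambda>n::nat. inverse (real (Suc n) ^ 2))"
    using inverse_power_summable[of 2, where 'a=real] by (subst summable_Suc_iff) simp
  then show ?thesis by (simp add: inverse_eq_divide add.commute)
qed

lemma fbm_dyadic_AE: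
  assumes P: "prob_space M" and F: "fBm M H B" and g1: "1/2 < \<gamma>" and g2: "\<gamma> < H"
  shows "AE \<omega> in M. \<exists>r::nat. \<forall>n m j::nat. j < 2^m \<longrightarrow>
     \<bar>B (real n + real (Suc j) / 2^m) \<omega> - B (real n + real j / 2^m) \<omega>\<bar> < real r * (real n + 1) * (1/2^m) powr \<gamma>"
proof -
  interpret prob_space M by fact
  have Bm[measurable]: "\<And>t. 0 \<le> t \<Longrightarrow> B t \<in> borel_measurable M"
    using F by (auto simp: fBm_def centered_gaussian_process_def)
  define k where "k = nat \<lceil>1 / (H - \<gamma>)\<rceil>"
  have kge: "1 / (H - \<gamma>) \<le> real k" unfolding k_def by linarith
  have k1: "1 \<le> k"
  proof -
    have "0 < 1 / (H - \<gamma>)" using g2 by simp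
    then have "0 < real k" using kge by linarith
    then show ?thesis by simp
  qed
  have kk: "2 \<le> 2 * real k * (H - \<gamma>)" using kge g2 by (simp add: field_simps)
  define C where "C = (fact (2*k) / (2^k * fact k) :: real)"
  have C0: "0 \<le> C" by (simp add: C_def)
  define p where "p = (\<lambda>(n::nat) (m::nat) (j::nat). real n + real j / 2^m)"
  define E where "E = (\<lambda>(r::nat) (n::nat) (m::nat) (j::nat).
     {\<omega>\<in>space M. real r * (real n + 1) * (1/2^m) powr \<gamma> \<le> \<bar>B (p n m (Suc j)) \<omega> - B (p n m j) \<omega>\<bar>})"
  have p0: "0 \<le> p n m j" for n m j by (simp add: p_def)
  have Em[measurable]: "E r n m j \<in> sets M" for r n m j
    unfolding E_def using p0 by measurable
  have Eb: "measure M (E r n m j) \<le> C * (1/2^m)\<^sup>2 / (real r * (real n + 1))\<^sup>2"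
    if r: "1 \<le> r" for r n m j
  proof -
    have d: "p n m (Suc j) - p n m j = 1/2^m" by (simp add: p_def field_simps)
    have D: "distributed M lborel (\<lambda>\<omega>. B (p n m (Suc j)) \<omega> - B (p n m j) \<omega>) (normal_density 0 ((1/2^m) powr H))"
      proof -
      have "p n m j \<noteq> p n m (Suc j)" using d by auto
      then show ?thesis using fbm_incr[OF F p0 p0, of n m j n m "Suc j"] d by simp
    qed
    have "measure M (E r n m j) \<le> fact (2*k) / ((2/((1/2^m) powr H)\<^sup>2)^k * fact k) / (real r * (real n + 1) * (1/2^m) powr \<gamma>)^(2*k)"
      unfolding E_def using r by (intro normal_tail[OF P D]) auto
    also have "\<dots> \<le> C * (1/2^m)\<^sup>2 / (real r * (real n + 1))\<^sup>2"
    proof -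
      have "0 \<le> real r * real n" by simp
      moreover have "1 \<le> real r" using r by simp
      moreover have "real r * (real n + 1) = real r * real n + real r" by (simp add: distrib_left)
      ultimately have "1 \<le> real r * (real n + 1)" by linarith
      then show ?thesis unfolding C_def by (intro tail_bound_alg g2 kk k1) auto
    qed
    finally show ?thesis .
  qed
  define E' where "E' = (\<lambda>r n m. \<Union>j\<in>{..<(2::nat)^m}. E r n m j)"
  have E'm[measurable]: "E' r n m \<in> sets M" for r n m unfolding E'_def by measurable
  have E'b: "measure M (E' r n m) \<le> C / (real r * (real n + 1))\<^sup>2 * (1/2)^m"
    if r: "1 \<le> r" for r n m
  proof -
    have "measure M (E' r n m) \<le> (\<Sum>j\<in>{..<(2::nat)^m}. measure M (E r n m j))"
      unfolding E'_def by (intro measure_UNION_le) auto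
    also have "\<dots> \<le> (\<Sum>j\<in>{..<(2::nat)^m}. C * (1/2^m)\<^sup>2 / (real r * (real n + 1))\<^sup>2)"
      by (intro sum_mono Eb r)
    also have "\<dots> = C / (real r * (real n + 1))\<^sup>2 * (1/2)^m"
    proof -
      have w: "0 < (real r * (real n + 1))\<^sup>2" using r by simp
      have q: "(0::real) < 2^m" by simp
      have "(\<Sum>j\<in>{..<(2::nat)^m}. C * (1/2^m)\<^sup>2 / (real r * (real n + 1))\<^sup>2)
         = 2^m * (C * (1/2^m)\<^sup>2 / (real r * (real n + 1))\<^sup>2)" by simp
      also have "\<dots> = C / (real r * (real n + 1))\<^sup>2 * (1/2)^m"
        using alg_aux1[OF w q, of C] by (simp add: power_one_over)
      finally show ?thesis .
    qed
    finally show ?thesis .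
  qed
  define Fr where "Fr = (\<lambda>r n. \<Union>m. E' r n m)"
  have Frm[measurable]: "Fr r n \<in> sets M" for r n unfolding Fr_def by measurable
  have Frb: "measure M (Fr r n) \<le> 2 * C / (real r)\<^sup>2 * (1 / (real n + 1)\<^sup>2)"
    if r: "1 \<le> r" for r n
  proof -
    have g: "summable (\<lambda>m::nat. (1/2::real)^m)" by (rule summable_geometric) simp
    have "measure M (Fr r n) \<le> (\<Sum>m. C / (real r * (real n + 1))\<^sup>2 * (1/2)^m)"
      unfolding Fr_def by (intro measure_UN_bound E'm E'b r summable_mult g)
    also have "\<dots> = C / (real r * (real n + 1))\<^sup>2 * 2"
      using suminf_mult[OF g, of "C / (real r * (real n + 1))\<^sup>2"] suminf_geometric[of "1/2::real"] by simp
    also have "\<dots> = 2 * C / (real r)\<^sup>2 * (1 / (real n + 1)\<^sup>2)"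
      by (simp only: power_mult_distrib) (simp add: field_simps)
    finally show ?thesis .
  qed
  define S where "S = (\<Sum>n::nat. 1 / (real n + 1)\<^sup>2)"
  define Bad where "Bad = (\<lambda>r. \<Union>n. Fr r n)"
  have Badm[measurable]: "Bad r \<in> sets M" for r unfolding Bad_def by measurable
  have Badb: "measure M (Bad r) \<le> 2 * C / (real r)\<^sup>2 * S" if r: "1 \<le> r" for r
  proof -
    have "measure M (Bad r) \<le> (\<Sum>n. 2 * C / (real r)\<^sup>2 * (1 / (real n + 1)\<^sup>2))"
      unfolding Bad_def by (intro measure_UN_bound Frm Frb r summable_mult summable_inv_sq)
    also have "\<dots> = 2 * C / (real r)\<^sup>2 * S"
      unfolding S_def by (rule suminf_mult[OF summable_inv_sq])
    finally show ?thesis .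
  qed
  define N where "N = (\<Inter>r. Bad (Suc r))"
  have Nm[measurable]: "N \<in> sets M" unfolding N_def by measurable
  have S0: "0 \<le> S" unfolding S_def by (intro suminf_nonneg summable_inv_sq) auto
  have "measure M N \<le> e" if e: "0 < e" for e
  proof -
    obtain r::nat where r: "2 * C * S / e < real r" using reals_Archimedean2 by blast
    have "measure M N \<le> measure M (Bad (Suc r))"
      unfolding N_def by (intro finite_measure_mono) auto
    also have "\<dots> \<le> 2 * C / (real (Suc r))\<^sup>2 * S" by (rule Badb) simp
    also have "\<dots> \<le> 2 * C / real (Suc r) * S"
    proof -
      have "real (Suc r) \<le> (real (Suc r))\<^sup>2" by (simp add: power2_eq_square)
      then have "2 * C / (real (Suc r))\<^sup>2 \<le> 2 * C / real (Suc r)"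
        using C0 by (intro divide_left_mono) auto
      then show ?thesis using S0 by (rule mult_right_mono)
    qed
    also have "\<dots> \<le> e"
    proof -
      have "2 * C * S < e * real (Suc r)" using r e by (simp add: field_simps)
      then show ?thesis by (simp add: field_simps)
    qed
    finally show ?thesis .
  qed
  then have "measure M N = 0"
    by (metis measure_nonneg order.antisym field_lbound_gt_zero less_le_not_le)
  then have Nnull: "N \<in> null_sets M"
    using Nm by (simp add: emeasure_eq_measure null_sets_def)
  show ?thesis
  proof (rule AE_I'[OF Nnull], safe)
    fix \<omega> assume om: "\<omega> \<in> space M" and no: "\<not> (\<exists>r::nat. \<forall>n m j::nat. j < 2^m \<longrightarrow>
     \<bar>B (real n + real (Suc j) / 2^m) \<omega> - B (real n + real j / 2^m) \<omega>\<bar> < real r * (real n + 1) * (1/2^m) powr \<gamma>)"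
    show "\<omega> \<in> N" unfolding N_def
    proof
      fix r
      from no obtain n m j where jm: "j < (2::nat)^m" and
        "\<not> \<bar>B (real n + real (Suc j) / 2^m) \<omega> - B (real n + real j / 2^m) \<omega>\<bar> < real (Suc r) * (real n + 1) * (1/2^m) powr \<gamma>"
        by blast
      then have "\<omega> \<in> E (Suc r) n m j" using om unfolding E_def p_def by (auto simp: not_less)
      then show "\<omega> \<in> Bad (Suc r)" using jm unfolding Bad_def Fr_def E'_def by blast
    qed
  qed
qed

lemma exists_dyadic_scale:
  fixes \<delta> :: real assumes "0 < \<delta>" "\<delta> \<le> 1"
  shows "\<exists>m::nat. 1/2^(Suc m) < \<delta> \<and> \<delta> \<le> 1/2^m"
proof -
  obtain M::nat where M: "(1/2::real)^M < \<delta>" using real_arch_pow_inv[OF assms(1), of "1/2"] by auto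
  define M0 where "M0 = (LEAST M::nat. (1/2::real)^M < \<delta>)"
  have M0: "(1/2::real)^M0 < \<delta>" unfolding M0_def by (rule LeastI[of _ M]) (rule M)
  have "M0 \<noteq> 0"
  proof
    assume "M0 = 0" then show False using M0 assms by simp
  qed
  then obtain m where m: "M0 = Suc m" by (cases M0) auto
  have "\<not> (1/2::real)^m < \<delta>" using not_less_Least[of m "\<lambda>M. (1/2::real)^M < \<delta>"] m unfolding M0_def by auto
  then show ?thesis using M0 m by (auto simp: power_one_over intro!: exI[of _ m])
qed

lemma floor_dyadic_step:
  fixes x :: real
  shows "\<lfloor>x * 2^Suc m\<rfloor> = 2 * \<lfloor>x * 2^m\<rfloor> \<or> \<lfloor>x * 2^Suc m\<rfloor> = 2 * \<lfloor>x * 2^m\<rfloor> + 1"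
proof -
  define f where "f = \<lfloor>x * 2^m\<rfloor>"
  have f: "of_int f \<le> x * 2^m" "x * 2^m < of_int f + 1" unfolding f_def by linarith+
  have "of_int (2*f) \<le> x * 2^Suc m" "x * 2^Suc m < of_int (2*f) + 2" using f by auto
  then have "2*f \<le> \<lfloor>x * 2^Suc m\<rfloor>" "\<lfloor>x * 2^Suc m\<rfloor> < 2*f + 2"
    by (simp_all add: le_floor_iff floor_less_iff)
  then show ?thesis unfolding f_def by linarith
qed

lemma dyadic_chaining:
  fixes g :: "real \<Rightarrow> real" and L \<gamma> :: real
  assumes cont: "continuous_on {0..1} g" and g0: "0 < \<gamma>" and L0: "0 \<le> L"
    and inc: "\<And>m j. j < (2::nat)^m \<Longrightarrow> \<bar>g (real (Suc j) / 2^m) - g (real j / 2^m)\<bar> \<le> L * (1/2^m) powr \<gamma>"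
    and s: "s \<in> {0..1}" and t: "t \<in> {0..1}"
  shows "\<bar>g t - g s\<bar> \<le> 2 powr \<gamma> * (1 + 2 / (1 - (1/2) powr \<gamma>)) * L * \<bar>t - s\<bar> powr \<gamma>"
proof -
  define \<rho> where "\<rho> = (1/2::real) powr \<gamma>"
  have \<rho>0: "0 < \<rho>" and \<rho>1: "\<rho> < 1" unfolding \<rho>_def using g0 powr_less_mono'[of "1/2::real" 0 \<gamma>] by auto
  have rho_pow: "(1/2^m::real) powr \<gamma> = \<rho>^m" for m
  proof -
    have "(1/2^m::real) = (1/2) powr (real m)" by (simp add: powr_realpow power_one_over)
    then have "(1/2^m::real) powr \<gamma> = (1/2) powr (real m * \<gamma>)" by (simp add: powr_powr)
    also have "\<dots> = ((1/2) powr \<gamma>)^m" by (simp add: powr_powr[symmetric] powr_realpow mult.commute)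
    finally show ?thesis unfolding \<rho>_def .
  qed
  define f where "f = (\<lambda>(m::nat) (x::real). \<lfloor>x * 2^m\<rfloor>)"
  define d where "d = (\<lambda>m x. real_of_int (f m x) / 2^m)"
  have f0: "0 \<le> f m x" if "x \<in> {0..1}" for m x using that unfolding f_def by auto
  have f1: "f m x \<le> 2^m" if "x \<in> {0..1}" for m x
  proof -
    have h: "x * 2^m \<le> 2^m" using that by auto
    have "real_of_int (2^m) = (2::real)^m" by simp
    then have "x * 2^m < real_of_int (2^m) + 1" using h by linarith
    then show ?thesis unfolding f_def by (simp only: floor_le_iff)
  qed
  have dx: "d m x \<le> x" "x - 1/2^m < d m x" if "x \<in> {0..1}" for m x
  proof -
    have "of_int (f m x) \<le> x * 2^m" "x * 2^m < of_int (f m x) + 1" unfolding f_def by linarith+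
    moreover have q: "(0::real) < 2^m" by simp
    ultimately show "d m x \<le> x" "x - 1/2^m < d m x" unfolding d_def
      by (simp_all add: pos_less_divide_eq pos_divide_le_eq left_diff_distrib)
  qed
  have din: "d m x \<in> {0..1}" if "x \<in> {0..1}" for m x
  proof -
    have "0 \<le> d m x" using f0[OF that, of m] unfolding d_def by simp
    moreover have "d m x \<le> 1" using dx[OF that, of m] that by auto
    ultimately show ?thesis by simp
  qed
  have adj: "\<bar>g (d m x') - g (d m x)\<bar> \<le> L * \<rho>^m"
    if x: "x \<in> {0..1}" and x': "x' \<in> {0..1}" and fx: "f m x' = f m x \<or> f m x' = f m x + 1" for m x x'
  proof (cases "f m x' = f m x")
    case True then show ?thesis using L0 \<rho>0 unfolding d_def by simp
  next
    case False
    then have e: "f m x' = f m x + 1" using fx by auto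
    define j where "j = nat (f m x)"
    have jr: "real j = of_int (f m x)" unfolding j_def using f0[OF x] by simp
    have "f m x < 2^m" using f1[OF x', of m] e by simp
    then have jl: "j < 2^m" unfolding j_def using f0[OF x]
      by (metis nat_less_iff of_nat_numeral of_nat_power)
    have "d m x' = real (Suc j) / 2^m" "d m x = real j / 2^m" unfolding d_def using e jr by auto
    then show ?thesis using inc[OF jl] rho_pow by simp
  qed
  have step: "\<bar>g (d (Suc m) x) - g (d m x)\<bar> \<le> L * \<rho>^(Suc m)" if x: "x \<in> {0..1}" for m x
  proof (cases "f (Suc m) x = 2 * f m x")
    case True
    then have "d (Suc m) x = d m x" unfolding d_def by simp
    then show ?thesis using L0 \<rho>0 by simp
  next
    case False
    then have e: "f (Suc m) x = 2 * f m x + 1" using floor_dyadic_step[of x m] unfolding f_def by auto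
    define y where "y = real_of_int (2 * f m x) / 2^Suc m"
    have y: "y \<in> {0..1}" unfolding y_def using f0[OF x, of m] f1[OF x, of m] by auto
    have fy1: "f (Suc m) y = \<lfloor>y * 2^Suc m\<rfloor>" by (simp add: f_def)
    have "y * 2^Suc m = real_of_int (2 * f m x)" unfolding y_def by simp
    then have fy: "f (Suc m) y = 2 * f m x" unfolding fy1 by (metis floor_of_int)
    have dy: "d (Suc m) y = d m x" unfolding d_def fy by simp
    have "\<bar>g (d (Suc m) x) - g (d (Suc m) y)\<bar> \<le> L * \<rho>^(Suc m)"
      by (rule adj[OF y x]) (simp add: e fy)
    then show ?thesis using dy by simp
  qed
  have tele: "\<bar>g (d (m + k) x) - g (d m x)\<bar> \<le> L * \<rho>^(Suc m) * (1 / (1 - \<rho>))" if x: "x \<in> {0..1}" for m k x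
  proof -
    have "\<bar>g (d (m + k) x) - g (d m x)\<bar> \<le> (\<Sum>i<k. L * \<rho>^(Suc (m + i)))"
    proof (induction k)
      case 0 then show ?case by simp
    next
      case (Suc k)
      have "\<bar>g (d (m + Suc k) x) - g (d m x)\<bar> \<le> \<bar>g (d (Suc (m + k)) x) - g (d (m + k) x)\<bar> + \<bar>g (d (m + k) x) - g (d m x)\<bar>"
        by simp
      also have "\<dots> \<le> L * \<rho>^(Suc (m + k)) + (\<Sum>i<k. L * \<rho>^(Suc (m + i)))"
        using step[OF x, of "m + k"] Suc.IH by linarith
      finally show ?case by simp
    qed
    also have "\<dots> = L * \<rho>^(Suc m) * (\<Sum>i<k. \<rho>^i)"
      by (simp add: sum_distrib_left power_add mult_ac)
    also have "\<dots> \<le> L * \<rho>^(Suc m) * (1 / (1 - \<rho>))"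
    proof -
      have "(\<Sum>i<k. \<rho>^i) \<le> (\<Sum>i. \<rho>^i)"
        using \<rho>0 \<rho>1 by (intro sum_le_suminf summable_geometric) auto
      also have "\<dots> = 1 / (1 - \<rho>)" using \<rho>0 \<rho>1 by (intro suminf_geometric) auto
      finally show ?thesis using L0 \<rho>0 by (intro mult_left_mono) auto
    qed
    finally show ?thesis .
  qed
  have approx: "\<bar>g x - g (d m x)\<bar> \<le> L * \<rho>^m * (1 / (1 - \<rho>))" if x: "x \<in> {0..1}" for m x
  proof -
    have lim: "(\<lambda>k. d (m + k) x) \<longlonglongrightarrow> x"
    proof -
      have z: "(\<lambda>k. (1/2::real)^(m+k)) \<longlonglongrightarrow> 0"
        unfolding power_add by (intro tendsto_mult_right_zero LIMSEQ_power_zero) simp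
      have "(\<lambda>k. x - (1/2::real)^(m+k)) \<longlonglongrightarrow> x - 0"
        by (intro tendsto_diff tendsto_const z)
      then have l1: "(\<lambda>k. x - (1/2::real)^(m+k)) \<longlonglongrightarrow> x" by simp
      show ?thesis
        by (rule real_tendsto_sandwich[OF _ _ l1 tendsto_const])
           (use dx[OF x] in \<open>auto simp: power_one_over less_imp_le\<close>)
    qed
    have "((\<lambda>k. \<bar>g (d (m + k) x) - g (d m x)\<bar>) \<longlonglongrightarrow> \<bar>g x - g (d m x)\<bar>)"
      by (intro tendsto_intros continuous_on_tendsto_compose[OF cont lim] x) (use din[OF x] in auto)
    moreover have "\<bar>g (d (m + k) x) - g (d m x)\<bar> \<le> L * \<rho>^m * (1 / (1 - \<rho>))" for k
    proof -
      have "L * \<rho>^(Suc m) \<le> L * \<rho>^m" using L0 \<rho>0 \<rho>1 by (intro mult_left_mono) (auto simp: power_Suc2 mult_le_cancel_left1)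
      then show ?thesis using tele[OF x, of m k] \<rho>1 by (smt (verit) divide_pos_pos mult_right_mono)
    qed
    ultimately show ?thesis by (intro LIMSEQ_le_const2) auto
  qed
  show ?thesis
  proof (cases "s = t")
    case True then show ?thesis by simp
  next
    case False
    define a b where "a = min s t" and "b = max s t"
    have ab: "a < b" "a \<in> {0..1}" "b \<in> {0..1}" "\<bar>t - s\<bar> = b - a" "\<bar>g t - g s\<bar> = \<bar>g b - g a\<bar>"
      using False s t unfolding a_def b_def by (auto simp: abs_minus_commute min_def max_def)
    obtain m where m: "1/2^(Suc m) < b - a" "b - a \<le> 1/2^m"
      using exists_dyadic_scale[of "b - a"] ab by auto
    have fab: "f m b = f m a \<or> f m b = f m a + 1"
    proof -
      have "a * 2^m \<le> b * 2^m" "b * 2^m \<le> a * 2^m + 1" using ab m by (auto simp: field_simps)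
      then have "\<lfloor>a * 2^m\<rfloor> \<le> \<lfloor>b * 2^m\<rfloor>" "\<lfloor>b * 2^m\<rfloor> \<le> \<lfloor>a * 2^m\<rfloor> + 1"
        by (auto intro: floor_mono) (metis floor_add_int floor_mono of_int_1)
      then show ?thesis unfolding f_def by linarith
    qed
    have "\<bar>g b - g a\<bar> \<le> \<bar>g b - g (d m b)\<bar> + \<bar>g (d m b) - g (d m a)\<bar> + \<bar>g (d m a) - g a\<bar>"
      by linarith
    also have "\<dots> \<le> L * \<rho>^m * (1 / (1 - \<rho>)) + L * \<rho>^m + L * \<rho>^m * (1 / (1 - \<rho>))"
      using approx[OF ab(3), of m] approx[OF ab(2), of m] adj[OF ab(2) ab(3) fab]
      by (simp add: abs_minus_commute)
    also have "\<dots> = (1 + 2 / (1 - \<rho>)) * L * \<rho>^m" by (simp add: field_simps)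
    also have "\<dots> \<le> (1 + 2 / (1 - \<rho>)) * L * (2 powr \<gamma> * (b - a) powr \<gamma>)"
    proof -
      have "\<rho>^m = (1/2^m) powr \<gamma>" using rho_pow by simp
      also have "\<dots> \<le> (2 * (b - a)) powr \<gamma>"
        using m g0 by (intro powr_mono2) (auto simp: field_simps)
      also have "\<dots> = 2 powr \<gamma> * (b - a) powr \<gamma>" using ab by (subst powr_mult) auto
      finally have "\<rho>^m \<le> 2 powr \<gamma> * (b - a) powr \<gamma>" .
      moreover have "0 \<le> (1 + 2 / (1 - \<rho>)) * L" using \<rho>1 L0 by simp
      ultimately show ?thesis by (intro mult_left_mono) auto
    qed
    finally show ?thesis using ab unfolding \<rho>_def by (simp add: mult_ac)
  qed
qed

lemma unit_to_local_holder:
  fixes f :: "real \<Rightarrow> real"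
  assumes U: "\<And>(n::nat) s t. s \<in> {real n..real n + 1} \<Longrightarrow> t \<in> {real n..real n + 1} \<Longrightarrow>
      \<bar>f t - f s\<bar> \<le> K * (real n + 1) * \<bar>t - s\<bar> powr \<gamma>"
    and K: "0 \<le> K" and g: "0 < \<gamma>"
    and s: "0 \<le> s" "s \<le> T" and t: "0 \<le> t" "t \<le> T" and st: "\<bar>t - s\<bar> \<le> 1"
  shows "\<bar>f t - f s\<bar> \<le> 2 * K * (T + 2) * \<bar>t - s\<bar> powr \<gamma>"
proof -
  have main: "\<bar>f b - f a\<bar> \<le> 2 * K * (T + 2) * (b - a) powr \<gamma>"
    if ab: "0 \<le> a" "a \<le> b" "b \<le> T" "b - a \<le> 1" for a b
  proof -
    define n where "n = nat \<lfloor>a\<rfloor>"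
    have n: "real n \<le> a" "a < real n + 1" unfolding n_def using ab by linarith+
    have nT: "real n + 2 \<le> T + 2" using n ab by linarith
    have pw: "0 \<le> (b - a) powr \<gamma>" by simp
    show ?thesis
    proof (cases "b \<le> real n + 1")
      case True
      have "\<bar>f b - f a\<bar> \<le> K * (real n + 1) * \<bar>b - a\<bar> powr \<gamma>"
        using U[of a n b] n ab True by auto
      also have "\<dots> \<le> 2 * K * (T + 2) * (b - a) powr \<gamma>"
      proof -
        have "real n + 1 \<le> 2 * (T + 2)" using nT ab by (simp add: algebra_simps)
        then have "K * (real n + 1) \<le> K * (2 * (T + 2))" using K by (rule mult_left_mono)
        then have "K * (real n + 1) * (b - a) powr \<gamma> \<le> K * (2 * (T + 2)) * (b - a) powr \<gamma>"
          using pw by (rule mult_right_mono)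
        then show ?thesis using ab by (simp add: mult_ac)
      qed
      finally show ?thesis .
    next
      case False
      have b2: "b \<le> real (Suc n) + 1" using n ab by auto
      have 1: "\<bar>f b - f (real n + 1)\<bar> \<le> K * (real (Suc n) + 1) * \<bar>b - (real n + 1)\<bar> powr \<gamma>"
        using U[of "real n + 1" "Suc n" b] False b2 by auto
      have 2: "\<bar>f (real n + 1) - f a\<bar> \<le> K * (real n + 1) * \<bar>(real n + 1) - a\<bar> powr \<gamma>"
        using U[of a n "real n + 1"] n by auto
      have p1: "\<bar>b - (real n + 1)\<bar> powr \<gamma> \<le> (b - a) powr \<gamma>"
        using False n g by (intro powr_mono2) auto
      have p2: "\<bar>(real n + 1) - a\<bar> powr \<gamma> \<le> (b - a) powr \<gamma>"
        using False n g by (intro powr_mono2) auto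
      have "\<bar>f b - f a\<bar> \<le> \<bar>f b - f (real n + 1)\<bar> + \<bar>f (real n + 1) - f a\<bar>" by linarith
      also have "\<dots> \<le> K * (real (Suc n) + 1) * (b - a) powr \<gamma> + K * (real n + 1) * (b - a) powr \<gamma>"
        using 1 2 p1 p2 K by (smt (verit, best) mult_left_mono of_nat_0_le_iff zero_le_mult_iff)
      also have "\<dots> \<le> 2 * K * (T + 2) * (b - a) powr \<gamma>"
      proof -
        have "K * (real (Suc n) + 1) + K * (real n + 1) \<le> 2 * K * (T + 2)"
          using nT K by (simp add: algebra_simps) (smt (verit) mult_left_mono)
        then show ?thesis using pw by (metis distrib_right mult_right_mono)
      qed
      finally show ?thesis .
    qed
  qed
  show ?thesis
  proof (cases "s \<le> t")
    case True then show ?thesis using main[of s t] s t st by auto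
  next
    case False then show ?thesis using main[of t s] s t st by (auto simp: abs_minus_commute)
  qed
qed

lemma unit_to_growth:
  fixes f :: "real \<Rightarrow> real"
  assumes U: "\<And>(n::nat) s t. s \<in> {real n..real n + 1} \<Longrightarrow> t \<in> {real n..real n + 1} \<Longrightarrow>
      \<bar>f t - f s\<bar> \<le> K * (real n + 1) * \<bar>t - s\<bar> powr \<gamma>"
    and K: "0 \<le> K" and t: "0 \<le> t" and g: "0 < \<gamma>"
  shows "\<bar>f t\<bar> \<le> \<bar>f 0\<bar> + K * (t + 1)\<^sup>2"
proof -
  have int: "\<bar>f (real n) - f 0\<bar> \<le> K * (real n)\<^sup>2" for n :: nat
  proof (induction n)
    case 0 then show ?case by simp
  next
    case (Suc n)
    have "\<bar>f (real (Suc n)) - f (real n)\<bar> \<le> K * (real n + 1) * \<bar>real (Suc n) - real n\<bar> powr \<gamma>"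
      using U[of "real n" n "real (Suc n)"] by auto
    then have "\<bar>f (real (Suc n)) - f (real n)\<bar> \<le> K * (real n + 1)" by simp
    then have "\<bar>f (real (Suc n)) - f 0\<bar> \<le> K * (real n)\<^sup>2 + K * (real n + 1)" using Suc.IH by linarith
    also have "\<dots> \<le> K * (real (Suc n))\<^sup>2" using K by (simp add: power2_eq_square algebra_simps)
    finally show ?case .
  qed
  define n where "n = nat \<lfloor>t\<rfloor>"
  have n: "real n \<le> t" "t < real n + 1" unfolding n_def using t by linarith+
  have "\<bar>f t - f (real n)\<bar> \<le> K * (real n + 1) * \<bar>t - real n\<bar> powr \<gamma>"
    using U[of "real n" n t] n by auto
  also have "\<dots> \<le> K * (real n + 1) * 1"
  proof -
    have "\<bar>t - real n\<bar> powr \<gamma> \<le> 1 powr \<gamma>" using n g by (intro powr_mono2) auto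
    then show ?thesis using K by (intro mult_left_mono) auto
  qed
  finally have "\<bar>f t - f (real n)\<bar> \<le> K * (real n + 1)" by simp
  then have "\<bar>f t - f 0\<bar> \<le> K * (real n)\<^sup>2 + K * (real n + 1)" using int[of n] by linarith
  also have "\<dots> \<le> K * (real n + 1)\<^sup>2" using K by (simp add: power2_eq_square algebra_simps)
  also have "\<dots> \<le> K * (t + 1)\<^sup>2" using K n by (intro mult_left_mono power_mono) auto
  finally show ?thesis by linarith
qed

lemma partition_mono:
  fixes p :: "nat \<Rightarrow> real"
  assumes "\<forall>i<n. p i < p (Suc i)" "i \<le> j" "j \<le> n"
  shows "p i \<le> p j"
  using assms(2,3)
proof (induction j)
  case 0 then show ?case by simp
next
  case (Suc j)
  show ?case
  proof (cases "i = Suc j")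
    case True then show ?thesis by simp
  next
    case False
    then have "p i \<le> p j" using Suc by auto
    also have "p j < p (Suc j)" using assms(1) Suc.prems by auto
    finally show ?thesis by simp
  qed
qed

lemma RS_unique:
  assumes I: "has_RS_integral f g a b I" and J: "has_RS_integral f g a b J" and ab: "a < b"
  shows "I = J"
proof (rule ccontr)
  assume ne: "I \<noteq> J"
  define e where "e = \<bar>I - J\<bar> / 2"
  have e: "0 < e" using ne by (simp add: e_def)
  obtain d1 where d1: "d1 > 0" "\<forall>(n::nat) p xi. p 0 = a \<and> p n = b \<and>
        (\<forall>i<n. p i < p (Suc i) \<and> p (Suc i) - p i < d1 \<and> p i \<le> xi i \<and> xi i \<le> p (Suc i))
        \<longrightarrow> \<bar>RS_sum f g p xi n - I\<bar> < e" using I e unfolding has_RS_integral_def by blast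
  obtain d2 where d2: "d2 > 0" "\<forall>(n::nat) p xi. p 0 = a \<and> p n = b \<and>
        (\<forall>i<n. p i < p (Suc i) \<and> p (Suc i) - p i < d2 \<and> p i \<le> xi i \<and> xi i \<le> p (Suc i))
        \<longrightarrow> \<bar>RS_sum f g p xi n - J\<bar> < e" using J e unfolding has_RS_integral_def by blast
  obtain n::nat where n: "(b - a) / min d1 d2 < real n" using reals_Archimedean2 by blast
  have "0 < (b - a) / min d1 d2" using ab d1 d2 by simp
  then have n0: "0 < n" using n by (cases n) auto
  define p where "p = (\<lambda>i::nat. a + real i * (b - a) / real n)"
  have step: "p (Suc i) - p i = (b - a) / real n" for i by (simp add: p_def add_divide_distrib[symmetric] algebra_simps)
  have small: "(b - a) / real n < min d1 d2"
  proof -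
    have m0: "0 < min d1 d2" using d1 d2 by simp
    have "b - a < real n * min d1 d2" using n m0 by (simp only: divide_less_eq)
    moreover have "(0::real) < real n" using n0 by simp
    ultimately show ?thesis by (simp only: pos_divide_less_eq mult.commute)
  qed
  have pos: "0 < (b - a) / real n" using ab n0 by simp
  have stp: "p i < p (Suc i)" for i using step[of i] pos by linarith
  have cond: "\<forall>i<n. p i < p (Suc i) \<and> p (Suc i) - p i < d \<and> p i \<le> p i \<and> p i \<le> p (Suc i)"
    if "min d1 d2 \<le> d" for d using step small pos that stp less_imp_le by auto
  have "p 0 = a" "p n = b" using n0 by (auto simp: p_def)
  then have "\<bar>RS_sum f g p p n - I\<bar> < e" "\<bar>RS_sum f g p p n - J\<bar> < e"
    using d1(2) d2(2) cond[of d1] cond[of d2] by auto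
  then show False unfolding e_def by (auto simp: abs_less_iff abs_if split: if_splits)
qed

lemma RS_integral_eqI: "has_RS_integral f g a b I \<Longrightarrow> a < b \<Longrightarrow> RS_integral f g a b = I"
  unfolding RS_integral_def by (auto intro: RS_unique)

lemma avg_abs_le: "\<bar>x::real\<bar> \<le> c \<Longrightarrow> \<bar>y\<bar> \<le> c \<Longrightarrow> \<bar>(x + y) / 2\<bar> \<le> c"
  using abs_triangle_ineq[of x y] by simp

lemma RS_young_self:
  fixes f :: "real \<Rightarrow> real"
  assumes T: "0 < T" and C: "0 \<le> C" and g: "1/2 < \<gamma>"
    and hol: "\<And>u v. u \<in> {0..T} \<Longrightarrow> v \<in> {0..T} \<Longrightarrow> \<bar>u - v\<bar> \<le> 1 \<Longrightarrow> \<bar>f u - f v\<bar> \<le> C * \<bar>u - v\<bar> powr \<gamma>"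
  shows "has_RS_integral f f 0 T ((f T)\<^sup>2 / 2 - (f 0)\<^sup>2 / 2)"
  unfolding has_RS_integral_def
proof (intro allI impI)
  fix \<epsilon> :: real assume e: "0 < \<epsilon>"
  define q where "q = \<epsilon> / (2 * (C\<^sup>2 * T + 1))"
  have CT: "0 \<le> C\<^sup>2 * T" using T by simp
  have q: "0 < q" unfolding q_def using e CT by (intro divide_pos_pos) auto
  define ex where "ex = 2 * \<gamma> - 1"
  have ex: "0 < ex" unfolding ex_def using g by simp
  define \<delta> where "\<delta> = min 1 (q powr (1 / ex))"
  have d0: "0 < \<delta>" unfolding \<delta>_def using q by simp
  have d1: "\<delta> \<le> 1" unfolding \<delta>_def by simp
  have dq: "\<delta> powr ex \<le> q"
  proof -
    have "\<delta> powr ex \<le> (q powr (1 / ex)) powr ex"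
      unfolding \<delta>_def using d0 ex by (intro powr_mono2) (auto simp: \<delta>_def)
    also have "\<dots> = q" using ex q by (simp add: powr_powr)
    finally show ?thesis .
  qed
  show "\<exists>\<delta>>0. \<forall>n p xi. p 0 = 0 \<and> p n = T \<and>
        (\<forall>i<n. p i < p (Suc i) \<and> p (Suc i) - p i < \<delta> \<and> p i \<le> xi i \<and> xi i \<le> p (Suc i)) \<longrightarrow>
        \<bar>RS_sum f f p xi n - ((f T)\<^sup>2 / 2 - (f 0)\<^sup>2 / 2)\<bar> < \<epsilon>"
  proof (intro exI[of _ \<delta>] conjI allI impI d0)
    fix n p xi
    assume A: "p 0 = 0 \<and> p n = T \<and>
        (\<forall>i<n. p i < p (Suc i) \<and> p (Suc i) - p i < \<delta> \<and> p i \<le> xi i \<and> xi i \<le> p (Suc i))"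
    then have p0: "p 0 = 0" and pn: "p n = T"
      and P: "\<And>i. i < n \<Longrightarrow> p i < p (Suc i) \<and> p (Suc i) - p i < \<delta> \<and> p i \<le> xi i \<and> xi i \<le> p (Suc i)"
      by auto
    have mono: "\<forall>i<n. p i < p (Suc i)" using P by auto
    have pin: "p i \<in> {0..T}" if "i \<le> n" for i
      using partition_mono[OF mono, of 0 i] partition_mono[OF mono, of i n] that p0 pn by auto
    define D where "D = (\<lambda>i. p (Suc i) - p i)"
    have termb: "\<bar>f (xi i) * (f (p (Suc i)) - f (p i)) - ((f (p (Suc i)))\<^sup>2 / 2 - (f (p i))\<^sup>2 / 2)\<bar>
        \<le> C\<^sup>2 * q * D i" if i: "i < n" for i
    proof -
      have Pi: "p i < p (Suc i)" "p (Suc i) - p i < \<delta>" "p i \<le> xi i" "xi i \<le> p (Suc i)" using P[OF i] by auto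
      have a: "p i \<in> {0..T}" and b: "p (Suc i) \<in> {0..T}" using pin i by auto
      have x: "xi i \<in> {0..T}" using a b Pi by auto
      have Dpos: "0 < D i" "D i \<le> 1" using Pi d1 unfolding D_def by auto
      have h1: "\<bar>f (xi i) - f (p i)\<bar> \<le> C * D i powr \<gamma>"
      proof -
        have "\<bar>f (xi i) - f (p i)\<bar> \<le> C * \<bar>xi i - p i\<bar> powr \<gamma>" using hol[OF x a] Pi Dpos unfolding D_def by auto
        also have "\<dots> \<le> C * D i powr \<gamma>" using Pi g C unfolding D_def by (intro mult_left_mono powr_mono2) auto
        finally show ?thesis .
      qed
      have h2: "\<bar>f (xi i) - f (p (Suc i))\<bar> \<le> C * D i powr \<gamma>"
      proof -
        have "\<bar>f (xi i) - f (p (Suc i))\<bar> \<le> C * \<bar>xi i - p (Suc i)\<bar> powr \<gamma>" using hol[OF x b] Pi Dpos unfolding D_def by auto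
        also have "\<dots> \<le> C * D i powr \<gamma>" using Pi g C unfolding D_def by (intro mult_left_mono powr_mono2) auto
        finally show ?thesis .
      qed
      have h3: "\<bar>f (p (Suc i)) - f (p i)\<bar> \<le> C * D i powr \<gamma>"
        using hol[OF b a] Pi Dpos unfolding D_def by auto
      have eq: "f (xi i) * (f (p (Suc i)) - f (p i)) - ((f (p (Suc i)))\<^sup>2 / 2 - (f (p i))\<^sup>2 / 2)
          = ((f (xi i) - f (p i)) + (f (xi i) - f (p (Suc i)))) / 2 * (f (p (Suc i)) - f (p i))"
        by (simp add: power2_eq_square field_simps)
      have "\<bar>((f (xi i) - f (p i)) + (f (xi i) - f (p (Suc i)))) / 2\<bar> \<le> C * D i powr \<gamma>"
        using h1 h2 by (rule avg_abs_le)
      then have "\<bar>f (xi i) * (f (p (Suc i)) - f (p i)) - ((f (p (Suc i)))\<^sup>2 / 2 - (f (p i))\<^sup>2 / 2)\<bar>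
          \<le> (C * D i powr \<gamma>) * (C * D i powr \<gamma>)"
        unfolding eq abs_mult using h3 by (intro mult_mono) auto
      also have "\<dots> = C\<^sup>2 * (D i powr ex * D i)"
        using Dpos by (simp add: ex_def power2_eq_square powr_add[symmetric] powr_diff algebra_simps)
      also have "\<dots> \<le> C\<^sup>2 * (q * D i)"
      proof -
        have "D i powr ex \<le> \<delta> powr ex" using Dpos Pi ex unfolding D_def by (intro powr_mono2) auto
        then have "D i powr ex \<le> q" using dq by linarith
        then show ?thesis using Dpos by (intro mult_left_mono mult_right_mono) auto
      qed
      finally show ?thesis by (simp add: mult_ac)
    qed
    have tele: "(\<Sum>i<n. (f (p (Suc i)))\<^sup>2 / 2 - (f (p i))\<^sup>2 / 2) = (f T)\<^sup>2 / 2 - (f 0)\<^sup>2 / 2"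
      using sum_lessThan_telescope[of "\<lambda>i. (f (p i))\<^sup>2 / 2" n] p0 pn by simp
    have sumD: "(\<Sum>i<n. D i) = T"
      using sum_lessThan_telescope[of p n] p0 pn unfolding D_def by simp
    have "\<bar>RS_sum f f p xi n - ((f T)\<^sup>2 / 2 - (f 0)\<^sup>2 / 2)\<bar>
        = \<bar>\<Sum>i<n. f (xi i) * (f (p (Suc i)) - f (p i)) - ((f (p (Suc i)))\<^sup>2 / 2 - (f (p i))\<^sup>2 / 2)\<bar>"
      unfolding RS_sum_def tele[symmetric] sum_subtractf by simp
    also have "\<dots> \<le> (\<Sum>i<n. \<bar>f (xi i) * (f (p (Suc i)) - f (p i)) - ((f (p (Suc i)))\<^sup>2 / 2 - (f (p i))\<^sup>2 / 2)\<bar>)"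
      by (rule sum_abs)
    also have "\<dots> \<le> (\<Sum>i<n. C\<^sup>2 * q * D i)" by (intro sum_mono termb) auto
    also have "\<dots> = C\<^sup>2 * q * T" by (simp add: sum_distrib_left[symmetric] sumD)
    also have "\<dots> < \<epsilon>"
    proof -
      have "C\<^sup>2 * q * T = \<epsilon> * (C\<^sup>2 * T) / (2 * (C\<^sup>2 * T + 1))" unfolding q_def by simp
      also have "\<dots> < \<epsilon>"
        using e T C by (simp add: field_simps add_pos_nonneg)
      finally show ?thesis .
    qed
    finally show "\<bar>RS_sum f f p xi n - ((f T)\<^sup>2 / 2 - (f 0)\<^sup>2 / 2)\<bar> < \<epsilon>" .
  qed
qed

lemma mono_bdd_tendsto_at_top:
  fixes f :: "real \<Rightarrow> real"
  assumes mono: "\<And>s t. 0 \<le> s \<Longrightarrow> s \<le> t \<Longrightarrow> f s \<le> f t" and bdd: "\<And>t. 0 \<le> t \<Longrightarrow> f t \<le> M"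
  shows "\<exists>l. (f \<longlongrightarrow> l) at_top"
proof -
  define l where "l = (SUP t\<in>{0..}. f t)"
  have bd: "bdd_above (f ` {0..})" using bdd by (auto intro!: bdd_aboveI)
  have "(f \<longlongrightarrow> l) at_top"
  proof (rule increasing_tendsto)
    show "\<forall>\<^sub>F n in at_top. f n \<le> l"
      using eventually_ge_at_top[of "0::real"]
      by eventually_elim (unfold l_def, rule cSUP_upper[OF _ bd], auto)
    fix x assume "x < l"
    then obtain t0 where t0: "t0 \<in> {0..}" "x < f t0" unfolding l_def using less_cSUP_iff[OF _ bd, of x] by auto
    show "\<forall>\<^sub>F n in at_top. x < f n"
      using eventually_ge_at_top[of t0] by eventually_elim (use t0 mono in force)
  qed
  then show ?thesis by blast
qed

lemma integral_mono_upper: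
  fixes k :: "real \<Rightarrow> real"
  assumes c: "continuous_on {0..} k" and nn: "\<And>s. 0 \<le> s \<Longrightarrow> 0 \<le> k s" and st: "0 \<le> s" "s \<le> t"
  shows "integral {0..s} k \<le> integral {0..t} k"
proof -
  have ct: "continuous_on {0..t} k" using c by (rule continuous_on_subset) auto
  have "integral {0..s} k + integral {s..t} k = integral {0..t} k"
    by (rule Henstock_Kurzweil_Integration.integral_combine) (use st ct in \<open>auto intro: integrable_continuous_interval\<close>)
  moreover have "0 \<le> integral {s..t} k"
    using st nn by (intro integral_nonneg integrable_continuous_interval continuous_on_subset[OF ct]) auto
  ultimately show ?thesis by linarith
qed

lemma exp_half_integral:
  fixes \<theta> t :: real
  assumes th: "0 < \<theta>" and t: "0 \<le> t"
  shows "integral {0..t} (\<lambda>s. exp (-(\<theta>/2) * s)) \<le> 2 / \<theta>"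
proof -
  have "((\<lambda>s. exp (-(\<theta>/2) * s)) has_integral ((-(2/\<theta>) * exp (-(\<theta>/2) * t)) - (-(2/\<theta>) * exp (-(\<theta>/2) * 0)))) {0..t}"
    using t th by (intro fundamental_theorem_of_calculus)
      (auto intro!: derivative_eq_intros simp: has_real_derivative_iff_has_vector_derivative[symmetric] field_simps)
  then have "integral {0..t} (\<lambda>s. exp (-(\<theta>/2) * s)) = 2/\<theta> - (2/\<theta>) * exp (-(\<theta>/2) * t)"
    by (simp add: integral_unique)
  also have "\<dots> \<le> 2/\<theta>" using th by simp
  finally show ?thesis .
qed

lemma integral_exp_B_converges:
  fixes B :: "real \<Rightarrow> real"
  assumes th: "0 < \<theta>" and cB: "continuous_on {0..} B"
    and gr: "\<And>t. 0 \<le> t \<Longrightarrow> \<bar>B t\<bar> \<le> c * exp ((\<theta>/2) * t)"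
  shows "\<exists>Z. ((\<lambda>T. integral {0..T} (\<lambda>s. exp (-\<theta> * s) * B s)) \<longlongrightarrow> Z) at_top"
proof -
  define g where "g = (\<lambda>s. exp (-\<theta> * s) * B s)"
  define h where "h = (\<lambda>s. c * exp (-(\<theta>/2) * s))"
  have gh: "\<bar>g s\<bar> \<le> h s" if "0 \<le> s" for s
  proof -
    have "\<bar>g s\<bar> = exp (-\<theta> * s) * \<bar>B s\<bar>" by (simp add: g_def abs_mult)
    also have "\<dots> \<le> exp (-\<theta> * s) * (c * exp ((\<theta>/2) * s))" using gr[OF that] by (intro mult_left_mono) auto
    also have "\<dots> = h s" by (simp add: h_def mult_exp_exp[symmetric] algebra_simps flip: exp_add)
    finally show ?thesis .
  qed
  have ghn: "0 \<le> g s + h s" "g s \<le> h s" if "0 \<le> s" for s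
    using abs_le_D2[OF gh[OF that]] abs_le_D1[OF gh[OF that]] by linarith+
  have c0: "0 \<le> c" using gh[of 0] by (simp add: h_def)
  have cg: "continuous_on {0..} g" unfolding g_def by (intro continuous_intros cB)
  have ch: "continuous_on {0..} h" unfolding h_def by (intro continuous_intros)
  have int_g: "g integrable_on {0..t}" "h integrable_on {0..t}" for t
    by (intro integrable_continuous_interval continuous_on_subset[OF cg] continuous_on_subset[OF ch]; auto)+
  have hb: "integral {0..t} h \<le> c * (2/\<theta>)" if "0 \<le> t" for t
    using mult_left_mono[OF exp_half_integral[OF th that] c0] unfolding h_def by simp
  have "\<exists>l. ((\<lambda>T. integral {0..T} (\<lambda>s. g s + h s)) \<longlongrightarrow> l) at_top"
  proof (rule mono_bdd_tendsto_at_top)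
    show "integral {0..s} (\<lambda>s. g s + h s) \<le> integral {0..t} (\<lambda>s. g s + h s)" if "0 \<le> s" "s \<le> t" for s t
      using that ghn by (intro integral_mono_upper continuous_intros cg ch) auto
    show "integral {0..t} (\<lambda>s. g s + h s) \<le> 2 * (c * (2/\<theta>))" if "0 \<le> t" for t
    proof -
      have "integral {0..t} (\<lambda>s. g s + h s) \<le> integral {0..t} (\<lambda>s. 2 * h s)"
        using ghn int_g by (intro integral_le integrable_add integrable_cmul) auto
      also have "\<dots> = 2 * integral {0..t} h" by simp
      finally show ?thesis using hb[OF that] by linarith
    qed
  qed
  then obtain l1 where l1: "((\<lambda>T. integral {0..T} (\<lambda>s. g s + h s)) \<longlongrightarrow> l1) at_top" by blast
  have "\<exists>l. ((\<lambda>T. integral {0..T} h) \<longlongrightarrow> l) at_top"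
  proof (rule mono_bdd_tendsto_at_top)
    show "integral {0..s} h \<le> integral {0..t} h" if "0 \<le> s" "s \<le> t" for s t
      using that c0 by (intro integral_mono_upper ch) (auto simp: h_def)
  qed (rule hb)
  then obtain l2 where l2: "((\<lambda>T. integral {0..T} h) \<longlongrightarrow> l2) at_top" by blast
  have "((\<lambda>T. integral {0..T} (\<lambda>s. g s + h s) - integral {0..T} h) \<longlongrightarrow> l1 - l2) at_top"
    by (intro tendsto_diff l1 l2)
  moreover have "integral {0..T} (\<lambda>s. g s + h s) - integral {0..T} h = integral {0..T} g" for T
    using int_g by (simp add: integral_add)
  ultimately show ?thesis unfolding g_def by auto
qed

lemma ode_ratio:
  fixes X B :: "real \<Rightarrow> real" and \<theta> c Z :: real
  assumes th: "0 < \<theta>" and cX: "continuous_on {0..} X" and cB: "continuous_on {0..} B"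
    and ode: "\<And>t. 0 \<le> t \<Longrightarrow> X t = \<theta> * integral {0..t} X + B t"
    and gr: "\<And>t. 0 \<le> t \<Longrightarrow> \<bar>B t\<bar> \<le> c * exp ((\<theta>/2) * t)"
    and Zlim: "((\<lambda>T. integral {0..T} (\<lambda>s. exp (-\<theta> * s) * B s)) \<longlongrightarrow> Z) at_top"
    and Z0: "Z \<noteq> 0"
  shows "((\<lambda>t. ((X t)\<^sup>2 / 2 - (X 0)\<^sup>2 / 2) / integral {0..t} (\<lambda>s. (X s)\<^sup>2)) \<longlongrightarrow> \<theta>) at_top"
proof -
  define Y where "Y = (\<lambda>t. integral {0..t} X)"
  have cXt: "continuous_on {0..t} X" for t using cX by (rule continuous_on_subset) auto
  have WY: "exp (-\<theta> * t) * Y t = integral {0..t} (\<lambda>s. exp (-\<theta> * s) * B s)" if t: "0 \<le> t" for t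
  proof -
    have "((\<lambda>s. exp (-\<theta> * s) * B s) has_integral (exp (-\<theta> * t) * Y t - exp (-\<theta> * 0) * Y 0)) {0..t}"
    proof (rule fundamental_theorem_of_calculus[OF t])
      fix x assume x: "x \<in> {0..t}"
      have dY: "(Y has_real_derivative X x) (at x within {0..t})"
        unfolding Y_def has_real_derivative_iff_has_vector_derivative
        by (rule integral_has_vector_derivative[OF cXt x])
      have "((\<lambda>s. exp (-\<theta> * s) * Y s) has_real_derivative
          (exp (-\<theta> * x) * (-\<theta>) * Y x + exp (-\<theta> * x) * X x)) (at x within {0..t})"
        by (auto intro!: derivative_eq_intros dY)
      moreover have "exp (-\<theta> * x) * (-\<theta>) * Y x + exp (-\<theta> * x) * X x = exp (-\<theta> * x) * B x"
        using ode[of x] x unfolding Y_def by (simp add: algebra_simps)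
      ultimately show "((\<lambda>s. exp (-\<theta> * s) * Y s) has_vector_derivative exp (-\<theta> * x) * B x) (at x within {0..t})"
        by (simp add: has_real_derivative_iff_has_vector_derivative)
    qed
    moreover have "Y 0 = 0" unfolding Y_def by simp
    ultimately show ?thesis by (simp add: integral_unique)
  qed
  define \<xi> where "\<xi> = (\<lambda>t. exp (-\<theta> * t) * X t)"
  have Bdec: "((\<lambda>t. exp (-\<theta> * t) * B t) \<longlongrightarrow> 0) at_top"
  proof (rule Lim_null_comparison)
    show "\<forall>\<^sub>F t in at_top. norm (exp (-\<theta> * t) * B t) \<le> c * exp (-(\<theta>/2) * t)"
      using eventually_ge_at_top[of "0::real"]
    proof eventually_elim
      case (elim t)
      have "norm (exp (-\<theta> * t) * B t) = exp (-\<theta> * t) * \<bar>B t\<bar>" by (simp add: abs_mult)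
      also have "\<dots> \<le> exp (-\<theta> * t) * (c * exp ((\<theta>/2) * t))" using gr[OF elim] by (intro mult_left_mono) auto
      also have "\<dots> = c * exp (-(\<theta>/2) * t)" by (simp add: algebra_simps flip: exp_add)
      finally show ?case .
    qed
    show "((\<lambda>t. c * exp (-(\<theta>/2) * t)) \<longlongrightarrow> 0) at_top" using th by real_asymp
  qed
  have xi_lim: "(\<xi> \<longlongrightarrow> \<theta> * Z) at_top"
  proof -
    have "((\<lambda>t. \<theta> * integral {0..t} (\<lambda>s. exp (-\<theta> * s) * B s) + exp (-\<theta> * t) * B t) \<longlongrightarrow> \<theta> * Z + 0) at_top"
      by (intro tendsto_intros Zlim Bdec)
    moreover have "\<forall>\<^sub>F t in at_top. \<theta> * integral {0..t} (\<lambda>s. exp (-\<theta> * s) * B s) + exp (-\<theta> * t) * B t = \<xi> t"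
      using eventually_ge_at_top[of "0::real"]
    proof eventually_elim
      case (elim t)
      show ?case unfolding \<xi>_def WY[OF elim, symmetric] using ode[OF elim] unfolding Y_def by (simp add: algebra_simps)
    qed
    ultimately show ?thesis by (simp add: tendsto_cong)
  qed
  define L where "L = \<theta> * Z"
  have L0: "L \<noteq> 0" unfolding L_def using th Z0 by simp
  define Q where "Q = (\<lambda>t. integral {0..t} (\<lambda>s. (X s)\<^sup>2))"
  have dQ: "(Q has_real_derivative (X t)\<^sup>2) (at t)" if t: "0 < t" for t
  proof -
    have c2: "continuous_on {0..t+1} (\<lambda>s. (X s)\<^sup>2)" by (intro continuous_intros cXt)
    have "(Q has_real_derivative (X t)\<^sup>2) (at t within {0..t+1})"
      unfolding Q_def has_real_derivative_iff_has_vector_derivative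
      by (rule integral_has_vector_derivative[OF c2]) (use t in auto)
    then have "(Q has_real_derivative (X t)\<^sup>2) (at t within {0<..<t+1})"
      by (rule DERIV_subset) auto
    then show ?thesis using t by (subst (asm) at_within_open) auto
  qed
  have Qlim: "((\<lambda>t. Q t / exp (2 * \<theta> * t)) \<longlongrightarrow> L\<^sup>2 / (2 * \<theta>)) at_top"
  proof (rule lhospital_at_top_at_top)
    show "filterlim (\<lambda>t. exp (2 * \<theta> * t)) at_top at_top" using th by real_asymp
    show "\<forall>\<^sub>F x in at_top. 2 * \<theta> * exp (2 * \<theta> * x) \<noteq> 0" using th by simp
    show "\<forall>\<^sub>F x in at_top. (Q has_real_derivative (X x)\<^sup>2) (at x)"
      using eventually_gt_at_top[of "0::real"] by eventually_elim (rule dQ)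
    show "\<forall>\<^sub>F x in at_top. ((\<lambda>t. exp (2 * \<theta> * t)) has_real_derivative 2 * \<theta> * exp (2 * \<theta> * x)) (at x)"
      by (intro always_eventually allI) (auto intro!: derivative_eq_intros)
    have "((\<lambda>t. (\<xi> t)\<^sup>2 / (2 * \<theta>)) \<longlongrightarrow> L\<^sup>2 / (2 * \<theta>)) at_top"
      unfolding L_def by (intro tendsto_intros xi_lim) (use th in auto)
    moreover have "(\<xi> t)\<^sup>2 / (2 * \<theta>) = (X t)\<^sup>2 / (2 * \<theta> * exp (2 * \<theta> * t))" for t
      unfolding \<xi>_def by (simp add: power_mult_distrib exp_minus field_simps flip: exp_add exp_of_nat_mult)
    ultimately show "((\<lambda>t. (X t)\<^sup>2 / (2 * \<theta> * exp (2 * \<theta> * t))) \<longlongrightarrow> L\<^sup>2 / (2 * \<theta>)) at_top" by simp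
  qed
  have num: "((\<lambda>t. ((\<xi> t)\<^sup>2 - (X 0)\<^sup>2 * exp (-(2 * \<theta>) * t)) / 2) \<longlongrightarrow> (L\<^sup>2 - (X 0)\<^sup>2 * 0) / 2) at_top"
  proof -
    have e0: "((\<lambda>t. exp (-(2 * \<theta>) * t)) \<longlongrightarrow> 0) at_top" using th by real_asymp
    show ?thesis unfolding L_def by (intro e0 xi_lim tendsto_intros) simp_all
  qed
  have "((\<lambda>t. (((\<xi> t)\<^sup>2 - (X 0)\<^sup>2 * exp (-(2 * \<theta>) * t)) / 2) / (Q t / exp (2 * \<theta> * t)))
        \<longlongrightarrow> ((L\<^sup>2 - (X 0)\<^sup>2 * 0) / 2) / (L\<^sup>2 / (2 * \<theta>))) at_top"
    by (intro tendsto_divide num Qlim) (use L0 th in simp)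
  moreover have "((L\<^sup>2 - (X 0)\<^sup>2 * 0) / 2) / (L\<^sup>2 / (2 * \<theta>)) = \<theta>" using L0 th by (simp add: field_simps)
  moreover have "(((\<xi> t)\<^sup>2 - (X 0)\<^sup>2 * exp (-(2 * \<theta>) * t)) / 2) / (Q t / exp (2 * \<theta> * t))
      = ((X t)\<^sup>2 / 2 - (X 0)\<^sup>2 / 2) / integral {0..t} (\<lambda>s. (X s)\<^sup>2)" for t
  proof -
    have e: "exp (2 * \<theta> * t) * exp (-(2 * \<theta>) * t) = 1" by (simp flip: exp_add)
    have x: "(\<xi> t)\<^sup>2 * exp (2 * \<theta> * t) = (X t)\<^sup>2"
      unfolding \<xi>_def by (simp add: power_mult_distrib flip: exp_add exp_of_nat_mult)
    show ?thesis unfolding Q_def using e x by (simp add: field_simps)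
  qed
  ultimately show ?thesis by simp
qed

lemma sq_le_exp:
  fixes \<theta> y :: real assumes th: "0 < \<theta>" and y: "0 \<le> y"
  shows "y\<^sup>2 \<le> 16 / \<theta>\<^sup>2 * exp (\<theta> * y / 2)"
proof -
  have "\<theta> * y / 4 \<le> exp (\<theta> * y / 4)" using exp_ge_add_one_self[of "\<theta> * y / 4"] by linarith
  then have "(\<theta> * y / 4)\<^sup>2 \<le> (exp (\<theta> * y / 4))\<^sup>2" using th y by (intro power_mono) auto
  also have "(exp (\<theta> * y / 4))\<^sup>2 = exp (\<theta> * y / 2)" by (simp add: power2_eq_square flip: exp_add)
  finally have "\<theta>\<^sup>2 * y\<^sup>2 / 16 \<le> exp (\<theta> * y / 2)" by (simp add: power_mult_distrib power_divide)
  then show ?thesis using th by (simp add: field_simps)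
qed

lemma pow_le_powr_small: "0 \<le> (x::real) \<Longrightarrow> x \<le> 1 \<Longrightarrow> \<gamma> \<le> 1 \<Longrightarrow> x \<le> x powr \<gamma>"
  using powr_mono'[of \<gamma> 1 x] by (cases "x = 0") auto

lemma exp_diff_le:
  fixes \<theta> u s :: real assumes th: "0 < \<theta>" and us: "u \<le> s" "s \<le> u + 1"
  shows "\<bar>exp (-\<theta> * s) - exp (-\<theta> * u)\<bar> \<le> exp \<theta> * \<theta> * (s - u) * exp (-\<theta> * s)"
proof -
  have e: "exp (-\<theta> * u) = exp (-\<theta> * s) * exp (\<theta> * (s - u))"
    unfolding exp_add[symmetric] by (simp add: algebra_simps)
  have "exp (-\<theta> * s) \<le> exp (-\<theta> * u)" using th us by simp
  then have "\<bar>exp (-\<theta> * s) - exp (-\<theta> * u)\<bar> = exp (-\<theta> * u) - exp (-\<theta> * s)"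
    by simp
  also have "\<dots> = exp (-\<theta> * s) * (exp (\<theta> * (s - u)) - 1)"
    unfolding e by (simp add: right_diff_distrib)
  also have "exp (\<theta> * (s - u)) - 1 \<le> exp (\<theta> * (s - u)) * (\<theta> * (s - u))"
  proof -
    have "1 - \<theta> * (s - u) \<le> exp (-(\<theta> * (s - u)))" using exp_ge_add_one_self[of "-(\<theta> * (s - u))"] by linarith
    then have "exp (\<theta> * (s - u)) * (1 - \<theta> * (s - u)) \<le> exp (\<theta> * (s - u)) * exp (-(\<theta> * (s - u)))"
      by (intro mult_left_mono) auto
    then show ?thesis by (simp add: algebra_simps flip: exp_add)
  qed
  then have "exp (-\<theta> * s) * (exp (\<theta> * (s - u)) - 1) \<le> exp (-\<theta> * s) * (exp (\<theta> * (s - u)) * (\<theta> * (s - u)))"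
    by (intro mult_left_mono) auto
  also have "\<dots> \<le> exp (-\<theta> * s) * (exp \<theta> * (\<theta> * (s - u)))"
    using th us by (intro mult_left_mono mult_right_mono) auto
  finally show ?thesis by (simp add: mult_ac)
qed

lemma g_modulus:
  fixes B :: "real \<Rightarrow> real"
  assumes U: "\<And>(n::nat) s t. s \<in> {real n..real n + 1} \<Longrightarrow> t \<in> {real n..real n + 1} \<Longrightarrow>
      \<bar>B t - B s\<bar> \<le> K * (real n + 1) * \<bar>t - s\<bar> powr \<gamma>"
    and K: "0 \<le> K" and g0: "0 < \<gamma>" and g1: "\<gamma> \<le> 1" and th: "0 < \<theta>"
    and us: "0 \<le> u" "u \<le> s" "s \<le> u + 1"
  shows "\<bar>exp (-\<theta> * s) * B s - exp (-\<theta> * u) * B u\<bar>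
     \<le> (2 * K + exp \<theta> * \<theta> * (\<bar>B 0\<bar> + K)) * (16 / \<theta>\<^sup>2 * exp \<theta>) * exp (-(\<theta>/2) * s) * (s - u) powr \<gamma>"
proof -
  define A where "A = 2 * K + exp \<theta> * \<theta> * (\<bar>B 0\<bar> + K)"
  have A0: "0 \<le> A" unfolding A_def using K th by simp
  have h1: "\<bar>B s - B u\<bar> \<le> 2 * K * (s + 2) * (s - u) powr \<gamma>"
    using unit_to_local_holder[OF U K g0, of u s s] us by auto
  have h2: "\<bar>B u\<bar> \<le> \<bar>B 0\<bar> + K * (s + 1)\<^sup>2"
  proof -
    have "\<bar>B u\<bar> \<le> \<bar>B 0\<bar> + K * (u + 1)\<^sup>2" by (rule unit_to_growth[OF U K us(1) g0])
    also have "K * (u + 1)\<^sup>2 \<le> K * (s + 1)\<^sup>2" using us K by (intro mult_left_mono power_mono) auto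
    finally show ?thesis by simp
  qed
  have h3: "\<bar>exp (-\<theta> * s) - exp (-\<theta> * u)\<bar> \<le> exp \<theta> * \<theta> * (s - u) powr \<gamma> * exp (-\<theta> * s)"
  proof -
    have "s - u \<le> (s - u) powr \<gamma>" using us g1 by (intro pow_le_powr_small) auto
    then have "exp \<theta> * \<theta> * (s - u) * exp (-\<theta> * s) \<le> exp \<theta> * \<theta> * (s - u) powr \<gamma> * exp (-\<theta> * s)"
      using th by (intro mult_right_mono mult_left_mono) auto
    then show ?thesis using exp_diff_le[OF th us(2,3)] by linarith
  qed
  have s21: "1 \<le> s + 2" using us by simp
  have s2: "1 \<le> (s + 2)\<^sup>2" "s + 2 \<le> (s + 2)\<^sup>2" "(s + 1)\<^sup>2 \<le> (s + 2)\<^sup>2"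
  proof -
    show "1 \<le> (s + 2)\<^sup>2" using s21 by (rule one_le_power)
    have "(s + 2) * 1 \<le> (s + 2) * (s + 2)" using s21 by (intro mult_left_mono) auto
    then show "s + 2 \<le> (s + 2)\<^sup>2" by (simp add: power2_eq_square)
    show "(s + 1)\<^sup>2 \<le> (s + 2)\<^sup>2" using us by (intro power_mono) auto
  qed
  define p where "p = (s - u) powr \<gamma>"
  have p0: "0 \<le> p" unfolding p_def by simp
  have "\<bar>exp (-\<theta> * s) * B s - exp (-\<theta> * u) * B u\<bar>
      = \<bar>exp (-\<theta> * s) * (B s - B u) + (exp (-\<theta> * s) - exp (-\<theta> * u)) * B u\<bar>" by (simp add: algebra_simps)
  also have "\<dots> \<le> exp (-\<theta> * s) * \<bar>B s - B u\<bar> + \<bar>exp (-\<theta> * s) - exp (-\<theta> * u)\<bar> * \<bar>B u\<bar>"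
    by (rule order.trans[OF abs_triangle_ineq]) (simp add: abs_mult)
  also have "\<dots> \<le> exp (-\<theta> * s) * (2 * K * (s + 2) * p) + (exp \<theta> * \<theta> * p * exp (-\<theta> * s)) * (\<bar>B 0\<bar> + K * (s + 1)\<^sup>2)"
    unfolding p_def using h1 h2 h3 by (intro add_mono mult_left_mono mult_mono) auto
  also have "\<dots> = exp (-\<theta> * s) * p * (2 * K * (s + 2) + exp \<theta> * \<theta> * (\<bar>B 0\<bar> + K * (s + 1)\<^sup>2))"
    by (simp add: algebra_simps)
  also have "\<dots> \<le> exp (-\<theta> * s) * p * (A * (s + 2)\<^sup>2)"
  proof -
    have "2 * K * (s + 2) \<le> 2 * K * (s + 2)\<^sup>2" using s2 K by (intro mult_left_mono) auto
    moreover have "\<bar>B 0\<bar> + K * (s + 1)\<^sup>2 \<le> (\<bar>B 0\<bar> + K) * (s + 2)\<^sup>2"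
    proof -
      have "\<bar>B 0\<bar> * 1 \<le> \<bar>B 0\<bar> * (s + 2)\<^sup>2" using s2(1) by (intro mult_left_mono) auto
      moreover have "K * (s + 1)\<^sup>2 \<le> K * (s + 2)\<^sup>2" using s2(3) K by (intro mult_left_mono) auto
      ultimately show ?thesis by (simp add: distrib_right)
    qed
    then have "exp \<theta> * \<theta> * (\<bar>B 0\<bar> + K * (s + 1)\<^sup>2) \<le> exp \<theta> * \<theta> * ((\<bar>B 0\<bar> + K) * (s + 2)\<^sup>2)"
      using th by (intro mult_left_mono) auto
    ultimately have "2 * K * (s + 2) + exp \<theta> * \<theta> * (\<bar>B 0\<bar> + K * (s + 1)\<^sup>2) \<le> A * (s + 2)\<^sup>2"
      unfolding A_def by (simp add: algebra_simps)
    then show ?thesis using p0 by (intro mult_left_mono) auto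
  qed
  also have "\<dots> \<le> exp (-\<theta> * s) * p * (A * (16 / \<theta>\<^sup>2 * exp (\<theta> * (s + 2) / 2)))"
    using sq_le_exp[OF th, of "s + 2"] us A0 p0 by (intro mult_left_mono) auto
  also have "\<dots> = A * (16 / \<theta>\<^sup>2 * exp \<theta>) * exp (-(\<theta>/2) * s) * p"
  proof -
    have "exp (-\<theta> * s) * exp (\<theta> * (s + 2) / 2) = exp \<theta> * exp (-(\<theta>/2) * s)"
      unfolding exp_add[symmetric] by (rule arg_cong[where f=exp]) (simp add: field_simps)
    then show ?thesis by (simp add: algebra_simps)
  qed
  finally show ?thesis unfolding A_def p_def .
qed

lemma sum_integral_pieces:
  fixes f :: "real \<Rightarrow> real"
  assumes c: "continuous_on {0..} f" and h: "0 \<le> h"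
  shows "(\<Sum>i<n. integral {real i * h..(real i + 1) * h} f) = integral {0..real n * h} f"
proof (induction n)
  case 0 then show ?case by simp
next
  case (Suc n)
  have ct: "continuous_on {0..(real n + 1) * h} f" using c by (rule continuous_on_subset) auto
  have "integral {0..real n * h} f + integral {real n * h..(real n + 1) * h} f = integral {0..(real n + 1) * h} f"
    by (rule Henstock_Kurzweil_Integration.integral_combine)
       (use h ct in \<open>auto intro: integrable_continuous_interval simp: mult_right_mono\<close>)
  then show ?case using Suc.IH by (simp add: add.commute)
qed

lemma riemann_to_Z:
  fixes B :: "real \<Rightarrow> real"
  assumes U: "\<And>(n::nat) s t. s \<in> {real n..real n + 1} \<Longrightarrow> t \<in> {real n..real n + 1} \<Longrightarrow>
      \<bar>B t - B s\<bar> \<le> K * (real n + 1) * \<bar>t - s\<bar> powr \<gamma>"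
    and K: "0 \<le> K" and g0: "0 < \<gamma>" and g1: "\<gamma> \<le> 1" and th: "0 < \<theta>"
    and cB: "continuous_on {0..} B"
    and Zlim: "((\<lambda>T. integral {0..T} (\<lambda>s. exp (-\<theta> * s) * B s)) \<longlongrightarrow> Z) at_top"
  shows "(\<lambda>N::nat. \<Sum>i<N*N. (1 / real N) * (exp (-\<theta> * (real i / real N)) * B (real i / real N))) \<longlonglongrightarrow> Z"
proof -
  define g where "g = (\<lambda>s. exp (-\<theta> * s) * B s)"
  define M where "M = (2 * K + exp \<theta> * \<theta> * (\<bar>B 0\<bar> + K)) * (16 / \<theta>\<^sup>2 * exp \<theta>)"
  define e where "e = (\<lambda>s. exp (-(\<theta>/2) * s))"
  have M0: "0 \<le> M" unfolding M_def using K th by simp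
  have cg: "continuous_on {0..} g" unfolding g_def by (intro continuous_intros cB)
  have ce: "continuous_on {0..} e" unfolding e_def by (intro continuous_intros)
  have gmod: "\<bar>g s - g u\<bar> \<le> M * e s * (s - u) powr \<gamma>" if "0 \<le> u" "u \<le> s" "s \<le> u + 1" for u s
    using g_modulus[OF U K g0 g1 th that] unfolding g_def M_def e_def by (simp add: mult_ac)
  have piece: "\<bar>h * g u - integral {u..u+h} g\<bar> \<le> M * h powr \<gamma> * integral {u..u+h} e"
    if u: "0 \<le> u" and h: "0 < h" "h \<le> 1" for u h
  proof -
    have ig: "g integrable_on {u..u+h}" and ie: "e integrable_on {u..u+h}"
      using u h by (auto intro!: integrable_continuous_interval continuous_on_subset[OF cg] continuous_on_subset[OF ce])
    have "h * g u = integral {u..u+h} (\<lambda>s. g u)" using h by simp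
    moreover have "integral {u..u+h} (\<lambda>s. g u - g s) = integral {u..u+h} (\<lambda>s. g u) - integral {u..u+h} g"
      by (rule integral_diff) (use ig in \<open>auto intro: integrable_continuous_interval\<close>)
    ultimately have "h * g u - integral {u..u+h} g = integral {u..u+h} (\<lambda>s. g u - g s)" by simp
    then have "\<bar>h * g u - integral {u..u+h} g\<bar> = norm (integral {u..u+h} (\<lambda>s. g u - g s))" by simp
    also have "\<dots> \<le> integral {u..u+h} (\<lambda>s. M * h powr \<gamma> * e s)"
    proof (rule integral_norm_bound_integral)
      show "(\<lambda>s. g u - g s) integrable_on {u..u+h}" using ig by (intro integrable_diff) auto
      show "(\<lambda>s. M * h powr \<gamma> * e s) integrable_on {u..u+h}" using ie by (rule integrable_on_mult_right)
      fix s assume s: "s \<in> {u..u+h}"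
      have "norm (g u - g s) = \<bar>g s - g u\<bar>" by simp
      also have "\<dots> \<le> M * e s * (s - u) powr \<gamma>" using gmod[of u s] u s h by auto
      also have "\<dots> \<le> M * e s * h powr \<gamma>"
        using s g0 M0 by (intro mult_left_mono powr_mono2) (auto simp: e_def)
      finally show "norm (g u - g s) \<le> M * h powr \<gamma> * e s" by (simp add: mult_ac)
    qed
    also have "\<dots> = M * h powr \<gamma> * integral {u..u+h} e" by simp
    finally show ?thesis .
  qed
  define S where "S = (\<lambda>N::nat. \<Sum>i<N*N. (1 / real N) * g (real i / real N))"
  have err: "\<bar>S N - integral {0..real N} g\<bar> \<le> M * (1 / real N) powr \<gamma> * (2 / \<theta>)" if N: "1 \<le> N" for N
  proof -
    define h where "h = 1 / real N"
    have h: "0 < h" "h \<le> 1" unfolding h_def using N by auto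
    have NN: "real (N * N) * h = real N" unfolding h_def using N by simp
    have SI: "integral {0..real N} g = (\<Sum>i<N*N. integral {real i * h..real i * h + h} g)"
      using sum_integral_pieces[OF cg less_imp_le[OF h(1)], of "N*N"] unfolding NN by (simp add: distrib_right)
    have SN: "S N = (\<Sum>i<N*N. h * g (real i * h))" unfolding S_def h_def by simp
    have "S N - integral {0..real N} g = (\<Sum>i<N*N. h * g (real i * h) - integral {real i * h..real i * h + h} g)"
      unfolding SN SI sum_subtractf ..
    then have "\<bar>S N - integral {0..real N} g\<bar> \<le> (\<Sum>i<N*N. \<bar>h * g (real i * h) - integral {real i * h..real i * h + h} g\<bar>)"
      by (simp add: sum_abs)
    also have "\<dots> \<le> (\<Sum>i<N*N. M * h powr \<gamma> * integral {real i * h..real i * h + h} e)"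
      by (intro sum_mono piece h) (use h in simp)
    also have "\<dots> = M * h powr \<gamma> * integral {0..real N} e"
      using sum_integral_pieces[OF ce less_imp_le[OF h(1)], of "N*N"] unfolding NN
      by (simp add: sum_distrib_left[symmetric] distrib_right)
    also have "\<dots> \<le> M * h powr \<gamma> * (2 / \<theta>)"
      using exp_half_integral[OF th, of "real N"] M0 unfolding e_def by (intro mult_left_mono) auto
    finally show ?thesis unfolding h_def .
  qed
  have I: "(\<lambda>N::nat. integral {0..real N} g) \<longlonglongrightarrow> Z"
    unfolding g_def by (rule filterlim_compose[OF Zlim filterlim_real_sequentially])
  have hz: "(\<lambda>N::nat. M * (1 / real N) powr \<gamma> * (2 / \<theta>)) \<longlonglongrightarrow> 0"
    using g0 by real_asymp
  have "(\<lambda>N. S N - integral {0..real N} g) \<longlonglongrightarrow> 0"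
  proof (rule Lim_null_comparison)
    show "\<forall>\<^sub>F N in sequentially. norm (S N - integral {0..real N} g) \<le> M * (1 / real N) powr \<gamma> * (2 / \<theta>)"
      using eventually_ge_at_top[of "1::nat"] by eventually_elim (use err in auto)
  qed (rule hz)
  from tendsto_add[OF this I] have "S \<longlonglongrightarrow> Z" by simp
  then show ?thesis unfolding S_def g_def .
qed

lemma powr_superadd:
  fixes a b p :: real assumes a: "0 \<le> a" and b: "0 \<le> b" and p: "1 \<le> p"
  shows "a powr p + b powr p \<le> (a + b) powr p"
proof (cases "a + b = 0")
  case True then have "a = 0" "b = 0" using a b by auto
  then show ?thesis by simp
next
  case False
  then have ab: "0 < a + b" using a b by simp
  define x y where "x = a / (a + b)" and "y = b / (a + b)"
  have x: "0 \<le> x" "x \<le> 1" and y: "0 \<le> y" "y \<le> 1" using a b ab by (auto simp: x_def y_def)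
  have xy: "x + y = 1" using ab by (simp add: x_def y_def add_divide_distrib[symmetric])
  have ax: "a = (a + b) * x" and by': "b = (a + b) * y" using ab by (auto simp: x_def y_def)
  have "a powr p = (a + b) powr p * x powr p" by (subst ax) (use ab x in \<open>simp add: powr_mult\<close>)
  moreover have "b powr p = (a + b) powr p * y powr p" by (subst by') (use ab y in \<open>simp add: powr_mult\<close>)
  moreover have "x powr p \<le> x" using powr_mono'[of 1 p x] x p by (cases "x = 0") auto
  moreover have "y powr p \<le> y" using powr_mono'[of 1 p y] y p by (cases "y = 0") auto
  ultimately have "a powr p + b powr p \<le> (a + b) powr p * x + (a + b) powr p * y"
    by (smt (verit) mult_left_mono powr_ge_zero)
  also have "\<dots> = (a + b) powr p" using xy by (simp add: distrib_left[symmetric])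
  finally show ?thesis .
qed

lemma fbm_cov_ge_min:
  assumes H: "1/2 \<le> H" and s: "0 \<le> s" and u: "0 \<le> u"
  shows "min s u powr (2*H) \<le> fbm_cov H s u"
proof -
  have p: "1 \<le> 2 * H" using H by simp
  have key: "a powr (2*H) \<le> fbm_cov H a b" if "0 \<le> a" "a \<le> b" for a b
  proof -
    have "a powr (2*H) + (b - a) powr (2*H) \<le> (a + (b - a)) powr (2*H)"
      using that p by (intro powr_superadd) auto
    then show ?thesis using that by (simp add: fbm_cov_def abs_minus_commute)
  qed
  show ?thesis
  proof (cases "s \<le> u")
    case True then show ?thesis using key[of s u] s by simp
  next
    case False then show ?thesis using key[of u s] u by (simp add: fbm_cov_sym)
  qed
qed

lemma riemann_var_lower:
  fixes \<theta> :: real and N :: nat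
  assumes H: "1/2 \<le> H" and th: "0 < \<theta>" and N: "2 \<le> N"
  defines "c \<equiv> (\<lambda>i::nat. (1 / real N) * exp (-\<theta> * (real i / real N)))"
    and "ts \<equiv> (\<lambda>i::nat. real i / real N)"
  shows "exp (-4 * \<theta>) \<le> (\<Sum>i<N*N. \<Sum>j<N*N. c i * c j * fbm_cov H (ts i) (ts j))"
proof -
  have c0: "0 \<le> c i" for i by (simp add: c_def)
  have ts0: "0 \<le> ts i" for i by (simp add: ts_def)
  have R0: "0 \<le> fbm_cov H (ts i) (ts j)" for i j
    using fbm_cov_ge_min[OF H ts0 ts0, of i j] by (meson order.trans powr_ge_zero)
  have nn: "0 \<le> c i * c j * fbm_cov H (ts i) (ts j)" for i j using c0 R0 by simp
  define I where "I = {N..<2*N}"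
  have NN: "2 * N \<le> N * N" using mult_le_mono1[OF N] .
  have IN: "I \<subseteq> {..<N*N}" unfolding I_def using NN by (auto intro: less_le_trans[OF _ NN])
  have Ic: "card I = N" unfolding I_def by simp
  have Nr: "(2::real) \<le> real N" using N by simp
  have cI: "(1 / real N) * exp (-2 * \<theta>) \<le> c i" if "i \<in> I" for i
  proof -
    have "real i < 2 * real N" using that unfolding I_def by auto
    then have "real i / real N \<le> 2" using Nr by (simp add: divide_le_eq)
    then have "\<theta> * (real i / real N) \<le> \<theta> * 2" using th by (intro mult_left_mono) auto
    then have "exp (-2 * \<theta>) \<le> exp (-\<theta> * (real i / real N))" by simp
    then show ?thesis unfolding c_def using Nr by (intro mult_left_mono) auto
  qed
  have RI: "1 \<le> fbm_cov H (ts i) (ts j)" if "i \<in> I" "j \<in> I" for i j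
  proof -
    have "1 \<le> ts i" "1 \<le> ts j" using that Nr unfolding I_def ts_def by (auto simp: le_divide_eq)
    then have "1 \<le> min (ts i) (ts j) powr (2*H)" using H by (simp add: ge_one_powr_ge_zero)
    then show ?thesis using fbm_cov_ge_min[OF H ts0 ts0, of i j] by linarith
  qed
  have "(\<Sum>i\<in>I. \<Sum>j\<in>I. ((1 / real N) * exp (-2 * \<theta>)) * ((1 / real N) * exp (-2 * \<theta>)) * 1)
       \<le> (\<Sum>i\<in>I. \<Sum>j\<in>I. c i * c j * fbm_cov H (ts i) (ts j))"
    by (intro sum_mono mult_mono cI RI) (auto simp: c0)
  also have "\<dots> \<le> (\<Sum>i\<in>I. \<Sum>j<N*N. c i * c j * fbm_cov H (ts i) (ts j))"
    by (intro sum_mono sum_mono2 IN nn) auto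
  also have "\<dots> \<le> (\<Sum>i<N*N. \<Sum>j<N*N. c i * c j * fbm_cov H (ts i) (ts j))"
    by (intro sum_mono2 IN sum_nonneg nn) auto
  finally show ?thesis using Nr Ic by (simp add: power2_eq_square flip: exp_add)
qed

lemma normal_small_ball:
  assumes P: "prob_space M" and D: "distributed M lborel Y (normal_density 0 \<sigma>)"
    and s: "0 < \<sigma>" and a: "0 < a"
  shows "measure M {\<omega>\<in>space M. \<bar>Y \<omega>\<bar> < a} \<le> 2 * a / sqrt (2 * pi * \<sigma>\<^sup>2)"
proof -
  interpret prob_space M by fact
  define k where "k = 1 / sqrt (2 * pi * \<sigma>\<^sup>2)"
  have k0: "0 \<le> k" unfolding k_def by simp
  have dk: "normal_density 0 \<sigma> x \<le> k" for x
  proof -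
    have "exp (- (x - 0)\<^sup>2 / (2 * \<sigma>\<^sup>2)) \<le> 1" by simp
    then have "1 / sqrt (2 * pi * \<sigma>\<^sup>2) * exp (- (x - 0)\<^sup>2 / (2 * \<sigma>\<^sup>2)) \<le> 1 / sqrt (2 * pi * \<sigma>\<^sup>2) * 1"
      by (intro mult_left_mono) auto
    then show ?thesis unfolding normal_density_def k_def by simp
  qed
  have eq: "{\<omega>\<in>space M. \<bar>Y \<omega>\<bar> < a} = Y -` {-a<..<a} \<inter> space M" by auto
  have "emeasure M {\<omega>\<in>space M. \<bar>Y \<omega>\<bar> < a} = (\<integral>\<^sup>+x. ennreal (normal_density 0 \<sigma> x) * indicator {-a<..<a} x \<partial>lborel)"
    unfolding eq by (rule distributed_emeasure[OF D]) auto
  also have "\<dots> \<le> (\<integral>\<^sup>+x. ennreal k * indicator {-a<..<a} x \<partial>lborel)"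
    by (intro nn_integral_mono) (auto intro: ennreal_leI dk split: split_indicator)
  also have "\<dots> = ennreal k * emeasure lborel {-a<..<a}"
    by (rule nn_integral_cmult_indicator) auto
  also have "\<dots> = ennreal (k * (2 * a))" using a k0 by (simp add: ennreal_mult)
  finally have "ennreal (measure M {\<omega>\<in>space M. \<bar>Y \<omega>\<bar> < a}) \<le> ennreal (k * (2 * a))"
    by (simp add: emeasure_eq_measure)
  then have "measure M {\<omega>\<in>space M. \<bar>Y \<omega>\<bar> < a} \<le> k * (2 * a)"
    using a k0 by (simp add: ennreal_le_iff)
  then show ?thesis unfolding k_def by simp
qed

lemma nondeg_AE:
  fixes Zf :: "'a \<Rightarrow> real" and Q :: "'a \<Rightarrow> bool"
  assumes P: "prob_space M" and F: "fBm M H B" and H: "1/2 < H" and th: "0 < \<theta>"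
    and conv: "\<And>\<omega>. Q \<omega> \<Longrightarrow> (\<lambda>N::nat. \<Sum>i<N*N. (1 / real N) * exp (-\<theta> * (real i / real N)) * B (real i / real N) \<omega>) \<longlonglongrightarrow> Zf \<omega>"
  shows "AE \<omega> in M. Q \<omega> \<longrightarrow> Zf \<omega> \<noteq> 0"
proof -
  interpret prob_space M by fact
  have G: "centered_gaussian_process M B (fbm_cov H)" using F by (simp add: fBm_def)
  have Bm[measurable]: "\<And>t. 0 \<le> t \<Longrightarrow> B t \<in> borel_measurable M"
    using G by (auto simp: centered_gaussian_process_def)
  define c where "c = (\<lambda>(N::nat) (i::nat). (1 / real N) * exp (-\<theta> * (real i / real N)))"
  define ts where "ts = (\<lambda>(N::nat) (i::nat). real i / real N)"
  define Y where "Y = (\<lambda>N \<omega>. \<Sum>i<N*N. c N i * B (ts N i) \<omega>)"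
  have Ym[measurable]: "Y N \<in> borel_measurable M" for N
    unfolding Y_def ts_def by measurable
  define v0 where "v0 = exp (-4 * \<theta>)"
  have v0: "0 < v0" unfolding v0_def by simp
  define b where "b = (\<lambda>\<epsilon>::real. 2 * \<epsilon> / sqrt (2 * pi * v0))"
  have bound: "measure M {\<omega>\<in>space M. \<bar>Y N \<omega>\<bar> < \<epsilon>} \<le> b \<epsilon>" if N: "2 \<le> N" and e: "0 < \<epsilon>" for N \<epsilon>
  proof -
    define v where "v = (\<Sum>i<N*N. \<Sum>j<N*N. c N i * c N j * fbm_cov H (ts N i) (ts N j))"
    have vv: "v0 \<le> v" unfolding v_def v0_def c_def ts_def
      using riemann_var_lower[of H \<theta> N] H th N by simp
    have "\<forall>i<N*N. 0 \<le> ts N i" by (simp add: ts_def)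
    with G have "let Y = (\<lambda>\<omega>. \<Sum>i<N*N. c N i * B (ts N i) \<omega>);
             v = (\<Sum>i<N*N. \<Sum>j<N*N. c N i * c N j * fbm_cov H (ts N i) (ts N j))
         in if v \<le> 0 then (AE \<omega> in M. Y \<omega> = 0)
            else distributed M lborel Y (normal_density 0 (sqrt v))"
      unfolding centered_gaussian_process_def by blast
    then have D: "distributed M lborel (Y N) (normal_density 0 (sqrt v))"
      using vv v0 unfolding Let_def v_def[symmetric] Y_def by (auto simp: fun_eq_iff)
    have "measure M {\<omega>\<in>space M. \<bar>Y N \<omega>\<bar> < \<epsilon>} \<le> 2 * \<epsilon> / sqrt (2 * pi * (sqrt v)\<^sup>2)"
      by (rule normal_small_ball[OF P D]) (use vv v0 e in auto)
    also have "\<dots> = 2 * \<epsilon> / sqrt (2 * pi * v)" using vv v0 by simp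
    also have "\<dots> \<le> b \<epsilon>" unfolding b_def using vv v0 e
      by (intro divide_left_mono real_sqrt_le_mono mult_left_mono mult_pos_pos) auto
    finally show ?thesis .
  qed
  define A where "A = (\<lambda>\<epsilon>. \<lambda>N0. {\<omega>\<in>space M. \<forall>N\<ge>N0 + 2. \<bar>Y N \<omega>\<bar> < \<epsilon>})"
  have Am[measurable]: "A \<epsilon> N0 \<in> sets M" for \<epsilon> N0 unfolding A_def by measurable
  have Ainc: "incseq (A \<epsilon>)" for \<epsilon> unfolding A_def incseq_def by auto
  have Ab: "measure M (\<Union>N0. A \<epsilon> N0) \<le> b \<epsilon>" if e: "0 < \<epsilon>" for \<epsilon>
  proof -
    have "(\<lambda>i. measure M (A \<epsilon> i)) \<longlonglongrightarrow> measure M (\<Union>i. A \<epsilon> i)"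
      by (rule finite_Lim_measure_incseq) (use Ainc in auto)
    moreover have "measure M (A \<epsilon> N0) \<le> b \<epsilon>" for N0
    proof -
      have "measure M (A \<epsilon> N0) \<le> measure M {\<omega>\<in>space M. \<bar>Y (N0 + 2) \<omega>\<bar> < \<epsilon>}"
        unfolding A_def by (intro finite_measure_mono) auto
      also have "\<dots> \<le> b \<epsilon>" by (rule bound) (use e in auto)
      finally show ?thesis .
    qed
    ultimately show ?thesis by (intro LIMSEQ_le_const2) auto
  qed
  define Nl where "Nl = (\<Inter>j::nat. \<Union>N0. A (1 / (real j + 1)) N0)"
  have Nlm[measurable]: "Nl \<in> sets M" unfolding Nl_def by measurable
  have "measure M Nl \<le> e" if e: "0 < e" for e
  proof -
    obtain j::nat where j: "4 / (e * sqrt (2 * pi * v0)) < real j" using reals_Archimedean2 by blast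
    have s0: "0 < sqrt (2 * pi * v0)" using v0 by simp
    have "measure M Nl \<le> measure M (\<Union>N0. A (1 / (real j + 1)) N0)"
      unfolding Nl_def by (intro finite_measure_mono) auto
    also have "\<dots> \<le> b (1 / (real j + 1))" by (rule Ab) simp
    also have "\<dots> \<le> e"
    proof -
      have "4 / (e * sqrt (2 * pi * v0)) < real j + 1" using j by simp
      then have "4 < (real j + 1) * (e * sqrt (2 * pi * v0))" using e s0 by (simp add: divide_less_eq)
      then have "2 \<le> e * ((real j + 1) * sqrt (2 * pi * v0))" by (simp add: mult_ac)
      moreover have "0 < (real j + 1) * sqrt (2 * pi * v0)" using s0 by simp
      moreover have "b (1 / (real j + 1)) = 2 / ((real j + 1) * sqrt (2 * pi * v0))" unfolding b_def by simp
      ultimately show ?thesis by (simp add: pos_divide_le_eq)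
    qed
    finally show ?thesis .
  qed
  then have "measure M Nl = 0"
    by (metis measure_nonneg order.antisym field_lbound_gt_zero less_le_not_le)
  then have Nnull: "Nl \<in> null_sets M"
    using Nlm by (simp add: emeasure_eq_measure null_sets_def)
  show ?thesis
  proof (rule AE_I'[OF Nnull], rule subsetI)
    fix \<omega> assume "\<omega> \<in> {\<omega> \<in> space M. \<not> (Q \<omega> \<longrightarrow> Zf \<omega> \<noteq> 0)}"
    then have om: "\<omega> \<in> space M" and q: "Q \<omega>" and z: "Zf \<omega> = 0" by auto
    have lim: "(\<lambda>N. Y N \<omega>) \<longlonglongrightarrow> 0"
      using conv[OF q] z unfolding Y_def c_def ts_def by simp
    show "\<omega> \<in> Nl" unfolding Nl_def
    proof
      fix j :: nat
      have "\<forall>\<^sub>F N in sequentially. \<bar>Y N \<omega>\<bar> < 1 / (real j + 1)"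
        using order_tendstoD(2)[OF tendsto_rabs[OF lim], of "1 / (real j + 1)"] by simp
      then obtain N1 where N1: "\<And>N. N \<ge> N1 \<Longrightarrow> \<bar>Y N \<omega>\<bar> < 1 / (real j + 1)"
        unfolding eventually_sequentially by blast
      then have "\<omega> \<in> A (1 / (real j + 1)) N1" unfolding A_def using om by auto
      then show "\<omega> \<in> (\<Union>N0. A (1 / (real j + 1)) N0)" by blast
    qed
  qed
qed

lemma dyadic_to_U:
  fixes f :: "real \<Rightarrow> real" and \<gamma> :: real and r :: nat
  assumes cf: "continuous_on {0..} f" and g0: "0 < \<gamma>"
    and D: "\<forall>n m j::nat. j < 2^m \<longrightarrow>
     \<bar>f (real n + real (Suc j) / 2^m) - f (real n + real j / 2^m)\<bar> < real r * (real n + 1) * (1/2^m) powr \<gamma>"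
    and s: "s \<in> {real n..real n + 1}" and t: "t \<in> {real n..real n + 1}"
  shows "\<bar>f t - f s\<bar> \<le> (2 powr \<gamma> * (1 + 2 / (1 - (1/2) powr \<gamma>)) * real r) * (real n + 1) * \<bar>t - s\<bar> powr \<gamma>"
proof -
  have c: "continuous_on {0..1} (\<lambda>x. f (real n + x))"
    by (intro continuous_on_compose2[OF cf] continuous_intros) auto
  have "\<bar>f (real n + (t - real n)) - f (real n + (s - real n))\<bar>
      \<le> 2 powr \<gamma> * (1 + 2 / (1 - (1/2) powr \<gamma>)) * (real r * (real n + 1)) * \<bar>(t - real n) - (s - real n)\<bar> powr \<gamma>"
  proof (rule dyadic_chaining[OF c g0])
    show "0 \<le> real r * (real n + 1)" by simp
    fix m j :: nat assume "j < 2^m"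
    then show "\<bar>f (real n + real (Suc j) / 2^m) - f (real n + real j / 2^m)\<bar> \<le> real r * (real n + 1) * (1/2^m) powr \<gamma>"
      using D by (meson less_imp_le)
  qed (use s t in auto)
  then show ?thesis by (simp add: mult_ac)
qed

lemma X_holder:
  fixes X B :: "real \<Rightarrow> real"
  assumes U: "\<And>(n::nat) s t. s \<in> {real n..real n + 1} \<Longrightarrow> t \<in> {real n..real n + 1} \<Longrightarrow>
      \<bar>B t - B s\<bar> \<le> K * (real n + 1) * \<bar>t - s\<bar> powr \<gamma>"
    and K: "0 \<le> K" and g0: "0 < \<gamma>" and g1: "\<gamma> \<le> 1" and th: "0 < \<theta>"
    and cX: "continuous_on {0..} X"
    and ode: "\<And>t. 0 \<le> t \<Longrightarrow> X t = \<theta> * integral {0..t} X + B t"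
    and T: "0 \<le> T"
  shows "\<exists>C\<ge>0. \<forall>u v. u \<in> {0..T} \<longrightarrow> v \<in> {0..T} \<longrightarrow> \<bar>u - v\<bar> \<le> 1 \<longrightarrow> \<bar>X u - X v\<bar> \<le> C * \<bar>u - v\<bar> powr \<gamma>"
proof -
  have cT: "continuous_on {0..T} X" using cX by (rule continuous_on_subset) auto
  have "compact (X ` {0..T})" by (intro compact_continuous_image cT) auto
  then obtain Mx where Mx: "\<And>x. x \<in> {0..T} \<Longrightarrow> \<bar>X x\<bar> \<le> Mx"
    using compact_imp_bounded bounded_real by (metis image_eqI)
  have Mx0: "0 \<le> Mx" using Mx[of 0] T by auto
  have Yd: "\<bar>integral {0..u} X - integral {0..v} X\<bar> \<le> Mx * (u - v)" if "0 \<le> v" "v \<le> u" "u \<le> T" for u v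
  proof -
    have cu: "continuous_on {0..u} X" using cX by (rule continuous_on_subset) auto
    have "integral {0..v} X + integral {v..u} X = integral {0..u} X"
      by (rule Henstock_Kurzweil_Integration.integral_combine)
         (use that cu in \<open>auto intro: integrable_continuous_interval\<close>)
    then have "\<bar>integral {0..u} X - integral {0..v} X\<bar> = norm (integral {v..u} X)" by simp
    also have "\<dots> \<le> integral {v..u} (\<lambda>_. Mx)"
      by (rule integral_norm_bound_integral)
         (use that Mx in \<open>auto intro!: integrable_continuous_interval continuous_on_subset[OF cu]\<close>)
    also have "\<dots> = Mx * (u - v)" using that by simp
    finally show ?thesis .
  qed
  define C where "C = \<theta> * Mx + 2 * K * (T + 2)"
  have C0: "0 \<le> C" unfolding C_def using th Mx0 K T by simp
  have main: "\<bar>X u - X v\<bar> \<le> C * (u - v) powr \<gamma>" if uv: "0 \<le> v" "v \<le> u" "u \<le> T" "u - v \<le> 1" for u v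
  proof -
    have "\<bar>X u - X v\<bar> = \<bar>\<theta> * (integral {0..u} X - integral {0..v} X) + (B u - B v)\<bar>"
      using ode[of u] ode[of v] uv by (simp add: algebra_simps)
    also have "\<dots> \<le> \<theta> * \<bar>integral {0..u} X - integral {0..v} X\<bar> + \<bar>B u - B v\<bar>"
      using th by (simp add: abs_mult abs_triangle_ineq order.trans[OF abs_triangle_ineq])
    also have "\<dots> \<le> \<theta> * (Mx * (u - v)) + 2 * K * (T + 2) * \<bar>u - v\<bar> powr \<gamma>"
      using Yd[OF uv(1-3)] unit_to_local_holder[OF U K g0, of v T u] uv th
      by (intro add_mono mult_left_mono) auto
    also have "\<dots> \<le> \<theta> * (Mx * (u - v) powr \<gamma>) + 2 * K * (T + 2) * (u - v) powr \<gamma>"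
      using pow_le_powr_small[of "u - v" \<gamma>] uv g1 th Mx0 by (simp add: mult_left_mono)
    also have "\<dots> = C * (u - v) powr \<gamma>" unfolding C_def by (simp add: algebra_simps)
    finally show ?thesis .
  qed
  show ?thesis
  proof (intro exI[of _ C] conjI C0 allI impI)
    fix u v assume "u \<in> {0..T}" "v \<in> {0..T}" "\<bar>u - v\<bar> \<le> 1"
    then show "\<bar>X u - X v\<bar> \<le> C * \<bar>u - v\<bar> powr \<gamma>"
      using main[of v u] main[of u v] by (cases "v \<le> u") (auto simp: abs_minus_commute)
  qed
qed

lemma good_path:
  fixes B X :: "real \<Rightarrow> real"
  assumes th: "0 < \<theta>" and cB: "continuous_on {0..} B" and cX: "continuous_on {0..} X"
    and ode: "\<And>t. 0 \<le> t \<Longrightarrow> X t = \<theta> * integral {0..t} X + B t"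
    and B0: "B 0 = 0"
    and U: "\<And>(n::nat) s t. s \<in> {real n..real n + 1} \<Longrightarrow> t \<in> {real n..real n + 1} \<Longrightarrow>
      \<bar>B t - B s\<bar> \<le> K * (real n + 1) * \<bar>t - s\<bar> powr \<gamma>"
    and K: "0 \<le> K" and g0: "1/2 < \<gamma>" and g1: "\<gamma> \<le> 1"
    and Zlim: "((\<lambda>T. integral {0..T} (\<lambda>s. exp (-\<theta> * s) * B s)) \<longlongrightarrow> Z) at_top"
    and Z0: "Z \<noteq> 0"
  shows "((\<lambda>t. RS_integral X X 0 t / integral {0..t} (\<lambda>s. (X s)\<^sup>2)) \<longlongrightarrow> \<theta>) at_top"
proof -
  have gp: "0 < \<gamma>" using g0 by simp
  define c where "c = K * (16 / \<theta>\<^sup>2 * exp (\<theta> / 2))"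
  have gr: "\<bar>B t\<bar> \<le> c * exp ((\<theta>/2) * t)" if t: "0 \<le> t" for t
  proof -
    have "\<bar>B t\<bar> \<le> \<bar>B 0\<bar> + K * (t + 1)\<^sup>2" by (rule unit_to_growth[OF U K t gp])
    also have "\<dots> = K * (t + 1)\<^sup>2" using B0 by simp
    also have "\<dots> \<le> K * (16 / \<theta>\<^sup>2 * exp (\<theta> * (t + 1) / 2))"
      using sq_le_exp[OF th, of "t + 1"] t K by (intro mult_left_mono) auto
    also have "exp (\<theta> * (t + 1) / 2) = exp (\<theta> / 2) * exp ((\<theta>/2) * t)"
      unfolding exp_add[symmetric] by (rule arg_cong[where f=exp]) (simp add: field_simps)
    finally show ?thesis unfolding c_def by (simp add: mult_ac)
  qed
  have lim: "((\<lambda>t. ((X t)\<^sup>2 / 2 - (X 0)\<^sup>2 / 2) / integral {0..t} (\<lambda>s. (X s)\<^sup>2)) \<longlongrightarrow> \<theta>) at_top"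
    by (rule ode_ratio[OF th cX cB ode gr Zlim Z0])
  have "\<forall>\<^sub>F t in at_top. ((X t)\<^sup>2 / 2 - (X 0)\<^sup>2 / 2) / integral {0..t} (\<lambda>s. (X s)\<^sup>2)
      = RS_integral X X 0 t / integral {0..t} (\<lambda>s. (X s)\<^sup>2)"
    using eventually_gt_at_top[of "0::real"]
  proof eventually_elim
    case (elim t)
    obtain C where C: "0 \<le> C" "\<forall>u v. u \<in> {0..t} \<longrightarrow> v \<in> {0..t} \<longrightarrow> \<bar>u - v\<bar> \<le> 1 \<longrightarrow> \<bar>X u - X v\<bar> \<le> C * \<bar>u - v\<bar> powr \<gamma>"
      using X_holder[OF U K gp g1 th cX ode, of t] elim by auto
    have "has_RS_integral X X 0 t ((X t)\<^sup>2 / 2 - (X 0)\<^sup>2 / 2)"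
      by (rule RS_young_self[OF elim C(1) g0]) (use C(2) in auto)
    then have "RS_integral X X 0 t = (X t)\<^sup>2 / 2 - (X 0)\<^sup>2 / 2"
      using elim by (rule RS_integral_eqI)
    then show ?case by simp
  qed
  then have "((\<lambda>t. ((X t)\<^sup>2 / 2 - (X 0)\<^sup>2 / 2) / integral {0..t} (\<lambda>s. (X s)\<^sup>2)) \<longlongrightarrow> \<theta>) at_top
      = ((\<lambda>t. RS_integral X X 0 t / integral {0..t} (\<lambda>s. (X s)\<^sup>2)) \<longlongrightarrow> \<theta>) at_top"
    by (rule tendsto_cong)
  with lim show ?thesis by simp
qed

theorem mainTheorem1:
  fixes M :: "'a measure" and B X :: "real \<Rightarrow> 'a \<Rightarrow> real" and H \<theta> :: real
  assumes "prob_space M"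
    and "1/2 < H" and "H < 1" and "\<theta> > 0"
    and "fBm M H B"
    and "\<forall>\<omega>. continuous_on {0..} (\<lambda>t. B t \<omega>)"
    and "\<forall>\<omega>. continuous_on {0..} (\<lambda>t. X t \<omega>)"
    and "\<forall>\<omega> t. 0 \<le> t \<longrightarrow> X t \<omega> = \<theta> * integral {0..t} (\<lambda>s. X s \<omega>) + B t \<omega>"
  shows "AE \<omega> in M.
    ((\<lambda>t. RS_integral (\<lambda>s. X s \<omega>) (\<lambda>s. X s \<omega>) 0 t / integral {0..t} (\<lambda>s. (X s \<omega>)\<^sup>2))
       \<longlongrightarrow> \<theta>) at_top"
proof -
  note P = assms(1) and H1 = assms(2) and H2 = assms(3) and th = assms(4) and F = assms(5)
    and cB = assms(6) and cX = assms(7) and ode = assms(8)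
  interpret prob_space M by (rule P)
  define \<gamma> where "\<gamma> = (2 * H + 1) / 4"
  have g0: "1/2 < \<gamma>" and gH: "\<gamma> < H" and gp: "0 < \<gamma>" and g1: "\<gamma> \<le> 1"
    using H1 H2 unfolding \<gamma>_def by auto
  define Cg where "Cg = 2 powr \<gamma> * (1 + 2 / (1 - (1/2) powr \<gamma>))"
  have Cg0: "0 \<le> Cg"
  proof -
    have "(1/2::real) powr \<gamma> < 1" using gp powr_less_mono'[of "1/2::real" 0 \<gamma>] by auto
    then show ?thesis unfolding Cg_def by simp
  qed
  define Dy where "Dy = (\<lambda>\<omega>. \<exists>r::nat. \<forall>n m j::nat. j < 2^m \<longrightarrow>
     \<bar>B (real n + real (Suc j) / 2^m) \<omega> - B (real n + real j / 2^m) \<omega>\<bar> < real r * (real n + 1) * (1/2^m) powr \<gamma>)"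
  define good where "good = (\<lambda>\<omega>. B 0 \<omega> = 0 \<and> Dy \<omega>)"
  have AEgood: "AE \<omega> in M. good \<omega>"
  proof -
    have "AE \<omega> in M. B 0 \<omega> = 0" using F by (simp add: fBm_def)
    moreover have "AE \<omega> in M. Dy \<omega>" unfolding Dy_def by (rule fbm_dyadic_AE[OF P F g0 gH])
    ultimately show ?thesis unfolding good_def by eventually_elim auto
  qed
  have Ugood: "\<exists>K\<ge>0. \<forall>(n::nat) s t. s \<in> {real n..real n + 1} \<longrightarrow> t \<in> {real n..real n + 1} \<longrightarrow>
      \<bar>B t \<omega> - B s \<omega>\<bar> \<le> K * (real n + 1) * \<bar>t - s\<bar> powr \<gamma>" if Dyo: "Dy \<omega>" for \<omega>
  proof -
    obtain r :: nat where r: "\<forall>n m j::nat. j < 2^m \<longrightarrow>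
     \<bar>B (real n + real (Suc j) / 2^m) \<omega> - B (real n + real j / 2^m) \<omega>\<bar> < real r * (real n + 1) * (1/2^m) powr \<gamma>"
      using Dyo unfolding Dy_def by blast
    show ?thesis
    proof (intro exI[of _ "Cg * real r"] conjI allI impI)
      show "0 \<le> Cg * real r" using Cg0 by simp
      fix n :: nat and s t assume s: "s \<in> {real n..real n + 1}" and t: "t \<in> {real n..real n + 1}"
      show "\<bar>B t \<omega> - B s \<omega>\<bar> \<le> Cg * real r * (real n + 1) * \<bar>t - s\<bar> powr \<gamma>"
        using dyadic_to_U[where f="\<lambda>t. B t \<omega>", OF cB[rule_format, of \<omega>] gp r s t] unfolding Cg_def .
    qed
  qed
  define Zf where "Zf = (\<lambda>\<omega>. Lim at_top (\<lambda>T. integral {0..T} (\<lambda>s. exp (-\<theta> * s) * B s \<omega>)))"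
  have Zlim: "((\<lambda>T. integral {0..T} (\<lambda>s. exp (-\<theta> * s) * B s \<omega>)) \<longlongrightarrow> Zf \<omega>) at_top" if gdo: "good \<omega>" for \<omega>
  proof -
    obtain K where K: "0 \<le> K" and U: "\<And>(n::nat) s t. s \<in> {real n..real n + 1} \<Longrightarrow> t \<in> {real n..real n + 1} \<Longrightarrow>
      \<bar>B t \<omega> - B s \<omega>\<bar> \<le> K * (real n + 1) * \<bar>t - s\<bar> powr \<gamma>"
      using Ugood[of \<omega>] gdo unfolding good_def by blast
    define c where "c = K * (16 / \<theta>\<^sup>2 * exp (\<theta> / 2))"
    have gr: "\<bar>B t \<omega>\<bar> \<le> c * exp ((\<theta>/2) * t)" if t: "0 \<le> t" for t
    proof -
      have "\<bar>B t \<omega>\<bar> \<le> \<bar>B 0 \<omega>\<bar> + K * (t + 1)\<^sup>2" by (rule unit_to_growth[where f="\<lambda>t. B t \<omega>", OF U K t gp])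
      also have "\<dots> = K * (t + 1)\<^sup>2" using \<open>good \<omega>\<close> by (simp add: good_def)
      also have "\<dots> \<le> K * (16 / \<theta>\<^sup>2 * exp (\<theta> * (t + 1) / 2))"
        using sq_le_exp[OF th, of "t + 1"] t K by (intro mult_left_mono) auto
      also have "exp (\<theta> * (t + 1) / 2) = exp (\<theta> / 2) * exp ((\<theta>/2) * t)"
        unfolding exp_add[symmetric] by (rule arg_cong[where f=exp]) (simp add: field_simps)
      finally show ?thesis unfolding c_def by (simp add: mult_ac)
    qed
    obtain Z where zl: "((\<lambda>T. integral {0..T} (\<lambda>s. exp (-\<theta> * s) * B s \<omega>)) \<longlongrightarrow> Z) at_top"
      using integral_exp_B_converges[where B="\<lambda>t. B t \<omega>", OF th cB[rule_format, of \<omega>] gr] by blast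
    have "Zf \<omega> = Z" unfolding Zf_def by (rule tendsto_Lim[OF _ zl]) simp
    then show ?thesis using zl by simp
  qed
  have conv: "(\<lambda>N::nat. \<Sum>i<N*N. (1 / real N) * exp (-\<theta> * (real i / real N)) * B (real i / real N) \<omega>) \<longlonglongrightarrow> Zf \<omega>"
    if gdo: "good \<omega>" for \<omega>
  proof -
    obtain K where K: "0 \<le> K" and U: "\<And>(n::nat) s t. s \<in> {real n..real n + 1} \<Longrightarrow> t \<in> {real n..real n + 1} \<Longrightarrow>
      \<bar>B t \<omega> - B s \<omega>\<bar> \<le> K * (real n + 1) * \<bar>t - s\<bar> powr \<gamma>"
      using Ugood[of \<omega>] gdo unfolding good_def by blast
    show ?thesis
      using riemann_to_Z[where B="\<lambda>t. B t \<omega>", OF U K gp g1 th cB[rule_format, of \<omega>] Zlim[OF gdo]]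
      by (simp add: mult.assoc)
  qed
  have AEnz: "AE \<omega> in M. good \<omega> \<longrightarrow> Zf \<omega> \<noteq> 0"
    by (rule nondeg_AE[OF P F H1 th conv])
  from AEgood AEnz show ?thesis
  proof eventually_elim
    case (elim \<omega>)
    then have gd: "good \<omega>" and nz: "Zf \<omega> \<noteq> 0" by auto
    obtain K where K: "0 \<le> K" and U: "\<And>(n::nat) s t. s \<in> {real n..real n + 1} \<Longrightarrow> t \<in> {real n..real n + 1} \<Longrightarrow>
      \<bar>B t \<omega> - B s \<omega>\<bar> \<le> K * (real n + 1) * \<bar>t - s\<bar> powr \<gamma>"
      using Ugood[of \<omega>] gd unfolding good_def by blast
    have odeo: "\<And>t. 0 \<le> t \<Longrightarrow> X t \<omega> = \<theta> * integral {0..t} (\<lambda>s. X s \<omega>) + B t \<omega>"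
      using ode by blast
    have B0: "B 0 \<omega> = 0" using gd by (simp add: good_def)
    show ?case
      by (rule good_path[where B="\<lambda>t. B t \<omega>" and X="\<lambda>t. X t \<omega>", OF th cB[rule_format, of \<omega>] cX[rule_format, of \<omega>] odeo B0 U K g0 g1 Zlim[OF gd] nz])
  qed
qed

end
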